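(* Assume $s>1$ and $T_{s-1}=\delta>m_{s-1}>m_s\ge 2$. Put $\alpha=n_s/(\delta-m_s)$ (which equals $n_{s-1}/(\delta-m_{s-1})$). Then for every $(z,w)\in A_0\setminus E_w$ the limit $G_z(w)=\lim_{n\to\infty}\delta^{-n}\log|w_n|$ exists and $G_z(w)=\alpha G_p(z)$.
   Context: Let $f(z,w)=(p(z),q(z,w))$ be a holomorphic skew product defined on $\mathbb{C}^2$ or on $\{|z|<R\}\times\mathbb{C}$, where $R$ is so large that the attracting basin $A_p$ of $p$ at $0$ is relatively compact in $\{|z|<R\}$. Assume $p(z)=az^{\delta}+O(z^{\delta+1})$ with $a\neq 0$, $\delta\ge 2$, and $q(z,w)=\sum_{i,j\ge 0}b_{ij}z^iw^j$ with $b_{00}=b_{01}=0$ (both eigenvalues of $Df(0)$ vanish). The Newton polygon $N(q)$ is the convex hull of $\bigcup_{b_{ij}\neq 0}\{(x,y):x\ge i,\ y\ge j\}$; its vertices are $(n_1,m_1),\dots,(n_s,m_s)$ with $n_1<\dots<n_s$, $m_1>\dots>m_s$. For $1\le k\le s-1$, $T_k$ is the $y$-intercept of the line through $(n_k,m_k)$ and $(n_{k+1},m_{k+1})$. $A_0$ is the attracting basin of the origin for $f$ (points whose forward orbit converges to $(0,0)$); $E_w=\bigcup_{n\ge0}f^{-n}(\{w=0\})$. Write $(z_n,w_n)=f^n(z,w)$, and $G_p(z)=\lim_{n\to\infty}\delta^{-n}\log|p^n(z)|$ on $A_p$. *)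

theory Defs
  imports "HOL-Analysis.Analysis"
begin

definition skew :: "(complex \<Rightarrow> complex) \<Rightarrow> (complex \<Rightarrow> complex \<Rightarrow> complex)
    \<Rightarrow> complex \<times> complex \<Rightarrow> complex \<times> complex" where
  "skew p q = (\<lambda>(z, w). (p z, q z w))"

text \<open>Newton polygon of the coefficient family b (b i j is the coefficient of z^i w^j).\<close>
definition newton_polygon :: "(nat \<Rightarrow> nat \<Rightarrow> complex) \<Rightarrow> (real \<times> real) set" where
  "newton_polygon b = convex hull
     (\<Union>(i, j) \<in> {(i, j). b i j \<noteq> 0}. {(x, y). x \<ge> real i \<and> y \<ge> real j})"

definition newton_vertices :: "(nat \<Rightarrow> nat \<Rightarrow> complex) \<Rightarrow> (real \<times> real) set" where
  "newton_vertices b = {v. v extreme_point_of newton_polygon b}"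

definition y_intercept :: "real \<times> real \<Rightarrow> real \<times> real \<Rightarrow> real" where
  "y_intercept P Q = snd P - fst P * (snd Q - snd P) / (fst Q - fst P)"

definition basin_p :: "complex set \<Rightarrow> (complex \<Rightarrow> complex) \<Rightarrow> complex set" where
  "basin_p D p = {z \<in> D. (\<forall>n. (p ^^ n) z \<in> D) \<and> (\<lambda>n. (p ^^ n) z) \<longlonglongrightarrow> 0}"

definition basin0 :: "complex set \<Rightarrow> (complex \<Rightarrow> complex) \<Rightarrow> (complex \<Rightarrow> complex \<Rightarrow> complex)
    \<Rightarrow> (complex \<times> complex) set" where
  "basin0 D p q = {(z, w). z \<in> D \<and> (\<forall>n. fst ((skew p q ^^ n) (z, w)) \<in> D)
       \<and> (\<lambda>n. (skew p q ^^ n) (z, w)) \<longlonglongrightarrow> (0, 0)}"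

definition Ew :: "complex set \<Rightarrow> (complex \<Rightarrow> complex) \<Rightarrow> (complex \<Rightarrow> complex \<Rightarrow> complex)
    \<Rightarrow> (complex \<times> complex) set" where
  "Ew D p q = {(z, w). z \<in> D \<and> (\<exists>n. (\<forall>k\<le>n. fst ((skew p q ^^ k) (z, w)) \<in> D)
       \<and> snd ((skew p q ^^ n) (z, w)) = 0)}"

definition elog :: "real \<Rightarrow> ereal" where
  "elog x = (if x = 0 then -\<infinity> else ereal (ln x))"

definition green_p :: "(complex \<Rightarrow> complex) \<Rightarrow> nat \<Rightarrow> complex \<Rightarrow> ereal" where
  "green_p p \<delta> z = lim (\<lambda>n. elog (cmod ((p ^^ n) z)) / ereal (real \<delta> ^ n))"

end

theory Submission
  imports Defs
begin

lemma np_support: "b i j \<noteq> 0 \<Longrightarrow> (real i, real j) \<in> newton_polygon b"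
  unfolding newton_polygon_def by (rule hull_subset[THEN subsetD]) auto

lemma np_up:
  assumes "x \<in> newton_polygon b" "0 \<le> v1" "0 \<le> v2"
  shows "(v1, v2) + x \<in> newton_polygon b"
proof -
  let ?S = "(\<Union>(i, j) \<in> {(i, j). b i j \<noteq> 0}. {(x, y). x \<ge> real i \<and> y \<ge> real j})"
  have sub: "(\<lambda>x. (v1, v2) + x) ` ?S \<subseteq> ?S"
    using assms(2,3) by auto
  have "(v1, v2) + x \<in> (\<lambda>x. (v1, v2) + x) ` (convex hull ?S)"
    using assms(1) unfolding newton_polygon_def by blast
  also have "\<dots> = convex hull ((\<lambda>x. (v1, v2) + x) ` ?S)"
    by (rule convex_hull_translation[symmetric])
  also have "\<dots> \<subseteq> convex hull ?S" by (rule hull_mono[OF sub])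
  finally show ?thesis unfolding newton_polygon_def .
qed

lemma np_ne:
  assumes P: "P extreme_point_of newton_polygon b" and Q: "Q \<in> newton_polygon b"
    and le: "fst Q \<le> fst P" "snd Q \<le> snd P"
  shows "Q = P"
proof (rule ccontr)
  assume ne: "Q \<noteq> P"
  define v1 where "v1 = 2 * (fst P - fst Q)"
  define v2 where "v2 = 2 * (snd P - snd Q)"
  have R: "(v1, v2) + Q \<in> newton_polygon b"
    using np_up[OF Q, of v1 v2] le unfolding v1_def v2_def by auto
  have mid: "P = midpoint Q ((v1, v2) + Q)"
    unfolding midpoint_def v1_def v2_def by (simp add: prod_eq_iff)
  have "Q \<noteq> (v1, v2) + Q"
    using ne unfolding v1_def v2_def by (auto simp: prod_eq_iff)
  then have "P \<in> open_segment Q ((v1, v2) + Q)"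
    using mid midpoint_in_open_segment by metis
  then show False using P Q R unfolding extreme_point_of_def by blast
qed

lemma vertex_support:
  assumes "P extreme_point_of newton_polygon b"
  shows "\<exists>i j. b i j \<noteq> 0 \<and> P = (real i, real j)"
proof -
  have "P \<in> (\<Union>(i, j) \<in> {(i, j). b i j \<noteq> 0}. {(x, y). x \<ge> real i \<and> y \<ge> real j})"
    using extreme_point_of_convex_hull assms unfolding newton_polygon_def by blast
  then obtain i j where ij: "b i j \<noteq> 0" "fst P \<ge> real i" "snd P \<ge> real j"
    by auto
  have "(real i, real j) = P"
    by (rule np_ne[OF assms np_support[of b i j, OF ij(1)]]) (use ij in auto)
  then show ?thesis using ij by blast
qed

lemma lexmin_extreme:
  fixes c1 c2 e1 e2 :: real
  assumes b0: "b i0 j0 \<noteq> 0" and c: "c1 \<ge> 0" "c2 \<ge> 0" "c1 = 0 \<Longrightarrow> e1 \<ge> 0" "c2 = 0 \<Longrightarrow> e2 \<ge> 0"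
    and det: "c1 * e2 - c2 * e1 \<noteq> 0"
    and mn: "\<And>i j. b i j \<noteq> 0 \<Longrightarrow> c1 * i + c2 * j > c1 * i0 + c2 * j0 \<or>
              (c1 * i + c2 * j = c1 * i0 + c2 * j0 \<and> e1 * i + e2 * j \<ge> e1 * i0 + e2 * j0)"
  shows "(real i0, real j0) extreme_point_of newton_polygon b"
proof -
  define f where "f = (\<lambda>p::real\<times>real. c1 * fst p + c2 * snd p)"
  define g where "g = (\<lambda>p::real\<times>real. e1 * fst p + e2 * snd p)"
  define f0 where "f0 = c1 * i0 + c2 * j0"
  define g0 where "g0 = e1 * i0 + e2 * j0"
  define H where "H = {p. f p > f0 \<or> (f p = f0 \<and> g p \<ge> g0)}"
  have cvx: "convex H"
    unfolding convex_def
  proof (intro ballI allI impI)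
    fix x y and u v :: real
    assume x: "x \<in> H" and y: "y \<in> H" and uv: "0 \<le> u" "0 \<le> v" "u + v = 1"
    have fl: "f (u *\<^sub>R x + v *\<^sub>R y) = u * f x + v * f y"
      unfolding f_def by (simp add: algebra_simps)
    have gl: "g (u *\<^sub>R x + v *\<^sub>R y) = u * g x + v * g y"
      unfolding g_def by (simp add: algebra_simps)
    have fx: "f x \<ge> f0" and fy: "f y \<ge> f0" using x y unfolding H_def by auto
    show "u *\<^sub>R x + v *\<^sub>R y \<in> H"
    proof (cases "u = 0 \<or> v = 0")
      case True
      then show ?thesis using x y uv by auto
    next
      case False
      then have up: "u > 0" and vp: "v > 0" using uv by auto
      show ?thesis
      proof (cases "f x > f0 \<or> f y > f0")
        case True
        have "u * f x + v * f y > u * f0 + v * f0"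
        proof (cases "f x > f0")
          case True
          then have "u * f x > u * f0" using up by simp
          moreover have "v * f y \<ge> v * f0" using fy uv by (simp add: mult_left_mono)
          ultimately show ?thesis by linarith
        next
          case False
          with \<open>f x > f0 \<or> f y > f0\<close> have "f y > f0" by simp
          then have "v * f y > v * f0" using vp by simp
          moreover have "u * f x \<ge> u * f0" using fx uv by (simp add: mult_left_mono)
          ultimately show ?thesis by linarith
        qed
        then have "f (u *\<^sub>R x + v *\<^sub>R y) > f0"
          using fl uv by (metis distrib_right mult_1)
        then show ?thesis unfolding H_def by simp
      next
        case False
        then have "f x = f0" "f y = f0" using fx fy by auto
        then have gx: "g x \<ge> g0" and gy: "g y \<ge> g0" using x y unfolding H_def by auto
        have "f (u *\<^sub>R x + v *\<^sub>R y) = f0"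
          using fl \<open>f x = f0\<close> \<open>f y = f0\<close> uv by (metis distrib_right mult_1)
        moreover have "u * g x + v * g y \<ge> u * g0 + v * g0"
          using gx gy uv by (simp add: add_mono mult_left_mono)
        then have "g (u *\<^sub>R x + v *\<^sub>R y) \<ge> g0"
          using gl uv by (metis distrib_right mult_1)
        ultimately show ?thesis unfolding H_def by simp
      qed
    qed
  qed
  have SH: "(\<Union>(i, j) \<in> {(i, j). b i j \<noteq> 0}. {(x, y). x \<ge> real i \<and> y \<ge> real j}) \<subseteq> H"
  proof safe
    fix i j x y assume bij: "b i j \<noteq> 0" and xy: "x \<ge> real i" "y \<ge> real j"
    have d1: "c1 * (x - i) \<ge> 0" "c2 * (y - j) \<ge> 0" using xy c by auto
    have fe: "f (x, y) = (c1 * i + c2 * j) + c1 * (x - i) + c2 * (y - j)"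
      unfolding f_def by (simp add: algebra_simps)
    have ge: "g (x, y) = (e1 * i + e2 * j) + e1 * (x - i) + e2 * (y - j)"
      unfolding g_def by (simp add: algebra_simps)
    show "(x, y) \<in> H"
    proof (cases "f (x, y) > f0")
      case True then show ?thesis unfolding H_def by simp
    next
      case False
      from mn[OF bij] have m: "c1 * i + c2 * j \<ge> f0" unfolding f0_def by auto
      with False fe d1 have e: "c1 * (x - i) = 0" "c2 * (y - j) = 0" "c1 * i + c2 * j = f0" "f (x, y) = f0"
        by linarith+
      with mn[OF bij] have gij: "e1 * i + e2 * j \<ge> g0" unfolding f0_def g0_def by auto
      have "e1 * (x - i) \<ge> 0"
        using e(1) c(3) xy by (cases "c1 = 0") auto
      moreover have "e2 * (y - j) \<ge> 0"
        using e(2) c(4) xy by (cases "c2 = 0") auto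
      ultimately have "g (x, y) \<ge> g0" using ge gij by linarith
      then show ?thesis using e(4) unfolding H_def by simp
    qed
  qed
  have NPH: "newton_polygon b \<subseteq> H"
    unfolding newton_polygon_def using SH cvx by (rule hull_minimal)
  have inNP: "(real i0, real j0) \<in> newton_polygon b" by (rule np_support[of b i0 j0, OF b0])
  show ?thesis
    unfolding extreme_point_of_def
  proof (intro conjI inNP ballI notI)
    fix p q assume p: "p \<in> newton_polygon b" and q: "q \<in> newton_polygon b"
      and o: "(real i0, real j0) \<in> open_segment p q"
    then obtain u where pq: "p \<noteq> q" and u: "0 < u" "u < 1"
      and e: "(real i0, real j0) = (1 - u) *\<^sub>R p + u *\<^sub>R q"
      unfolding in_segment by blast
    have fp: "f p \<ge> f0" and fq: "f q \<ge> f0" using p q NPH unfolding H_def by auto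
    have "f0 = (1 - u) * f p + u * f q"
      using arg_cong[OF e, of f] unfolding f_def f0_def by (simp add: algebra_simps)
    moreover have "(1 - u) * (f p - f0) \<ge> 0" "u * (f q - f0) \<ge> 0" using fp fq u by auto
    ultimately have "(1 - u) * (f p - f0) + u * (f q - f0) = 0" "(1 - u) * (f p - f0) \<ge> 0" "u * (f q - f0) \<ge> 0"
      by (simp_all add: algebra_simps)
    then have "(1 - u) * (f p - f0) = 0" "u * (f q - f0) = 0" by linarith+
    then have fpe: "f p = f0" and fqe: "f q = f0" using u by auto
    then have gp: "g p \<ge> g0" and gq: "g q \<ge> g0" using p q NPH unfolding H_def by auto
    have "g0 = (1 - u) * g p + u * g q"
      using arg_cong[OF e, of g] unfolding g_def g0_def by (simp add: algebra_simps)
    moreover have "(1 - u) * (g p - g0) \<ge> 0" "u * (g q - g0) \<ge> 0" using gp gq u by auto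
    ultimately have "(1 - u) * (g p - g0) + u * (g q - g0) = 0" "(1 - u) * (g p - g0) \<ge> 0" "u * (g q - g0) \<ge> 0"
      by (simp_all add: algebra_simps)
    then have "(1 - u) * (g p - g0) = 0" "u * (g q - g0) = 0" by linarith+
    then have gpe: "g p = g0" and gqe: "g q = g0" using u by auto
    have uniq: "r = (real i0, real j0)" if "f r = f0" "g r = g0" for r
    proof -
      define s1 where "s1 = fst r - i0"
      define s2 where "s2 = snd r - j0"
      have h1: "c1 * s1 + c2 * s2 = 0" using that(1) unfolding f_def f0_def s1_def s2_def by (simp add: algebra_simps)
      have h2: "e1 * s1 + e2 * s2 = 0" using that(2) unfolding g_def g0_def s1_def s2_def by (simp add: algebra_simps)
      have "(c1 * e2 - c2 * e1) * s1 = e2 * (c1 * s1 + c2 * s2) - c2 * (e1 * s1 + e2 * s2)"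
        by (simp add: algebra_simps)
      then have "s1 = 0" using h1 h2 det by simp
      have "(c1 * e2 - c2 * e1) * s2 = c1 * (e1 * s1 + e2 * s2) - e1 * (c1 * s1 + c2 * s2)"
        by (simp add: algebra_simps)
      then have "s2 = 0" using h1 h2 det by simp
      show ?thesis using \<open>s1 = 0\<close> \<open>s2 = 0\<close> unfolding s1_def s2_def by (simp add: prod_eq_iff)
    qed
    have "p = q" using uniq[OF fpe gpe] uniq[OF fqe gqe] by simp
    then show False using pq by simp
  qed
qed

locale npd =
  fixes b :: "nat \<Rightarrow> nat \<Rightarrow> complex" and \<delta> s :: nat and nv mv :: "nat \<Rightarrow> nat"
  assumes s_gt: "s > 1"
    and vert: "newton_vertices b = (\<lambda>k. (real (nv k), real (mv k))) ` {1..s}"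
    and nv_mono: "strict_mono_on {1..s} nv"
    and T_eq: "y_intercept (real (nv (s - 1)), real (mv (s - 1))) (real (nv s), real (mv s)) = real \<delta>"
    and m1: "real \<delta> > real (mv (s - 1))" and m2: "mv (s - 1) > mv s" and m3: "mv s \<ge> 2"
begin

abbreviation "na \<equiv> nv (s - 1)"
abbreviation "ma \<equiv> mv (s - 1)"
abbreviation "nb \<equiv> nv s"
abbreviation "mb \<equiv> mv s"
abbreviation "NP \<equiv> newton_polygon b"

lemma ext: "k \<in> {1..s} \<Longrightarrow> (real (nv k), real (mv k)) extreme_point_of NP"
  using vert unfolding newton_vertices_def by blast

lemma ext_only: "x extreme_point_of NP \<Longrightarrow> \<exists>k\<in>{1..s}. x = (real (nv k), real (mv k))"
  using vert unfolding newton_vertices_def by blast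

lemma ext_in: "k \<in> {1..s} \<Longrightarrow> (real (nv k), real (mv k)) \<in> NP"
  using ext extreme_point_of_def by blast

lemma na_lt: "na < nb"
  using nv_mono s_gt unfolding strict_mono_on_def by auto

lemma nv_lt: "k \<in> {1..s} \<Longrightarrow> k < s - 1 \<Longrightarrow> nv k < na"
  using nv_mono s_gt unfolding strict_mono_on_def by auto

lemma nv_lt2: "k \<in> {1..s} \<Longrightarrow> k < s \<Longrightarrow> nv k < nb"
  using nv_mono s_gt unfolding strict_mono_on_def by auto

lemma mb_lt_delta: "mb < \<delta>" "ma < \<delta>" using m1 m2 by auto

lemma line_real: "real na * (real \<delta> - real mb) + real nb * real ma = real nb * real \<delta>"
proof -
  have ne: "real nb - real na \<noteq> 0" using na_lt by simp
  have "real ma - real na * (real mb - real ma) / (real nb - real na) = real \<delta>"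
    using T_eq unfolding y_intercept_def by simp
  then have "(real ma - real \<delta>) * (real nb - real na) = real na * (real mb - real ma)"
    using ne by (simp add: field_simps)
  then show ?thesis by (simp add: algebra_simps)
qed

lemma line: "na * (\<delta> - mb) + nb * ma = nb * \<delta>"
proof -
  have "real (na * (\<delta> - mb) + nb * ma) = real (nb * \<delta>)"
    using line_real mb_lt_delta by (simp add: of_nat_diff)
  then show ?thesis by (simp only: of_nat_eq_iff)
qed

lemma na_pos: "na \<ge> 1"
proof -
  have "real na * (real \<delta> - real mb) = real nb * (real \<delta> - real ma)"
    using line_real by (simp add: algebra_simps)
  moreover have "real nb > 0" using na_lt by simp
  moreover have "real \<delta> - real ma > 0" using m1 by simp
  ultimately have "real na * (real \<delta> - real mb) > 0" by simp
  then show ?thesis by (cases "na = 0") auto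
qed

lemma nb_pos: "nb \<ge> 1" using na_lt by simp

lemma b_nbmb: "b nb mb \<noteq> 0"
proof -
  obtain i j where ij: "b i j \<noteq> 0" "(real nb, real mb) = (real i, real j)"
    using vertex_support[OF ext[of s]] s_gt by auto
  then show ?thesis by simp
qed

lemma vert_m: "k \<in> {1..s} \<Longrightarrow> mv k \<ge> mb"
proof (rule ccontr)
  assume k: "k \<in> {1..s}" and "\<not> mv k \<ge> mb"
  then have lt: "mv k < mb" by simp
  then have "k \<noteq> s" by auto
  then have "nv k < nb" using nv_lt2 k by simp
  have "(real (nv k), real (mv k)) = (real nb, real mb)"
    by (rule np_ne[OF ext[of s] ext_in[OF k]]) (use \<open>nv k < nb\<close> lt s_gt in auto)
  then show False using lt by simp
qed

lemma vert_psi: "k \<in> {1..s} \<Longrightarrow> (real \<delta> - real mb) * real (nv k) + real nb * real (mv k) \<ge> real nb * real \<delta>"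
proof -
  assume k: "k \<in> {1..s}"
  define D where "D = real \<delta> - real mb"
  have Dp: "D > 0" using mb_lt_delta unfolding D_def by simp
  consider "k = s" | "k = s - 1" | "k < s - 1" using k by fastforce
  then show ?thesis
  proof cases
    case 1 then show ?thesis by (simp add: algebra_simps)
  next
    case 2 then show ?thesis using line_real by (simp add: algebra_simps)
  next
    case 3
    show ?thesis
    proof (rule ccontr)
      assume "\<not> ?thesis"
      then have lt: "D * real (nv k) + real nb * real (mv k) < real nb * real \<delta>"
        unfolding D_def by simp
      have nk: "nv k < na" using nv_lt k 3 by simp
      define t where "t = (real na - real (nv k)) / (real nb - real (nv k))"
      have t0: "0 \<le> t" "t \<le> 1" using nk na_lt unfolding t_def by (auto simp: field_simps)
      define Q where "Q = (1 - t) *\<^sub>R (real (nv k), real (mv k)) + t *\<^sub>R (real nb, real mb)"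
      have s1: "s \<in> {1..s}" using s_gt by simp
      have QN: "Q \<in> NP" unfolding Q_def
        by (rule convexD_alt[OF _ ext_in[OF k] ext_in[OF s1] t0])
           (simp add: newton_polygon_def convex_convex_hull)
      have tm: "t * (real nb - real (nv k)) = real na - real (nv k)"
        unfolding t_def using nk na_lt by simp
      have "fst Q = real (nv k) + t * (real nb - real (nv k))"
        unfolding Q_def by (simp add: algebra_simps)
      then have fQ: "fst Q = real na" using tm by simp
      have psiQ: "D * fst Q + real nb * snd Q = (1 - t) * (D * real (nv k) + real nb * real (mv k))
                      + t * (D * real nb + real nb * real mb)"
        unfolding Q_def by (simp add: algebra_simps)
      have "D * real nb + real nb * real mb = real nb * real \<delta>" unfolding D_def by (simp add: algebra_simps)
      then have psiQ': "D * fst Q + real nb * snd Q = (1 - t) * (D * real (nv k) + real nb * real (mv k))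
                      + t * (real nb * real \<delta>)" using psiQ by simp
      have tpos: "t > 0" using nk na_lt unfolding t_def by (auto simp: field_simps)
      have "t < 1 \<or> t = 1" using t0 by auto
      have "(1 - t) * (D * real (nv k) + real nb * real (mv k)) \<le> (1 - t) * (real nb * real \<delta>)"
        using lt t0 by (intro mult_left_mono) auto
      then have "D * fst Q + real nb * snd Q \<le> real nb * real \<delta>"
        using psiQ' by (simp add: algebra_simps)
      moreover have "D * real na + real nb * real ma = real nb * real \<delta>"
        using line_real unfolding D_def by (simp add: algebra_simps)
      ultimately have "real nb * snd Q \<le> real nb * real ma" using fQ by simp
      then have sQ: "snd Q \<le> real ma" using na_lt by simp
      have "Q = (real na, real ma)"
        by (rule np_ne[OF ext[of "s-1"] QN]) (use s_gt fQ sQ in auto)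
      have "t < 1" unfolding t_def using nk na_lt by (auto simp: field_simps)
      have "(1 - t) * (D * real (nv k) + real nb * real (mv k)) < (1 - t) * (real nb * real \<delta>)"
        using lt \<open>t < 1\<close> by (intro mult_strict_left_mono) auto
      then have "D * fst Q + real nb * snd Q < real nb * real \<delta>"
        using psiQ' by (simp add: algebra_simps)
      then show False using \<open>Q = (real na, real ma)\<close> line_real unfolding D_def by (simp add: algebra_simps)
    qed
  qed
qed

end

context npd begin

lemma F2: assumes bij: "b i j \<noteq> 0"
  shows "(real \<delta> - real mb) * real i + real nb * real j \<ge> real nb * real \<delta>"
proof -
  define D where "D = real \<delta> - real mb"
  have Dp: "D > 0" using mb_lt_delta unfolding D_def by simp
  define \<psi> where "\<psi> = (\<lambda>i j. (\<delta> - mb) * i + nb * j)"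
  have psi_r: "real (\<psi> i j) = D * real i + real nb * real j" for i j
    unfolding \<psi>_def D_def using mb_lt_delta by (simp add: of_nat_diff)
  define \<mu> where "\<mu> = (LEAST v. \<exists>i j. b i j \<noteq> 0 \<and> v = \<psi> i j)"
  have ex\<mu>: "\<exists>i j. b i j \<noteq> 0 \<and> \<mu> = \<psi> i j"
    unfolding \<mu>_def by (rule LeastI_ex) (use bij in blast)
  have le\<mu>: "\<mu> \<le> \<psi> i j" if "b i j \<noteq> 0" for i j
    unfolding \<mu>_def by (rule Least_le) (use that in blast)
  define j0 where "j0 = (LEAST j. \<exists>i. b i j \<noteq> 0 \<and> \<psi> i j = \<mu>)"
  have exj0: "\<exists>i. b i j0 \<noteq> 0 \<and> \<psi> i j0 = \<mu>"
    unfolding j0_def by (rule LeastI_ex) (use ex\<mu> in metis)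
  then obtain i0 where i0: "b i0 j0 \<noteq> 0" "\<psi> i0 j0 = \<mu>" by blast
  have lej0: "j0 \<le> j" if "b i j \<noteq> 0" "\<psi> i j = \<mu>" for i j
    unfolding j0_def by (rule Least_le) (use that in blast)
  have "(real i0, real j0) extreme_point_of NP"
  proof (rule lexmin_extreme[of b i0 j0 D "real nb" 0 1])
    show "b i0 j0 \<noteq> 0" by (rule i0(1))
    show "0 \<le> D" using Dp by simp
    show "0 \<le> real nb" by simp
    show "D * 1 - real nb * 0 \<noteq> 0" using Dp by simp
    fix i j assume "b i j \<noteq> 0"
    then have "\<psi> i0 j0 < \<psi> i j \<or> (\<psi> i0 j0 = \<psi> i j \<and> j0 \<le> j)"
      using le\<mu> lej0 i0(2) by (metis le_neq_implies_less)
    then have "real (\<psi> i0 j0) < real (\<psi> i j) \<or> (real (\<psi> i0 j0) = real (\<psi> i j) \<and> real j0 \<le> real j)"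
      by auto
    then show "D * real i0 + real nb * real j0 < D * real i + real nb * real j \<or>
         D * real i + real nb * real j = D * real i0 + real nb * real j0 \<and> 0 * real i0 + 1 * real j0 \<le> 0 * real i + 1 * real j"
      unfolding psi_r by auto
  qed auto
  then obtain k where k: "k \<in> {1..s}" "(real i0, real j0) = (real (nv k), real (mv k))"
    using ext_only by blast
  have "real (\<psi> i0 j0) \<ge> real nb * real \<delta>"
    using vert_psi[OF k(1)] k(2) unfolding psi_r D_def by simp
  moreover have "real (\<psi> i0 j0) \<le> real (\<psi> i j)" using le\<mu>[OF bij] i0(2) by simp
  ultimately show ?thesis unfolding psi_r D_def by simp
qed

lemma F1: assumes bij: "b i j \<noteq> 0" shows "j \<ge> mb"
proof -
  define \<mu> where "\<mu> = (LEAST j. \<exists>i. b i j \<noteq> 0)"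
  have ex\<mu>: "\<exists>i. b i \<mu> \<noteq> 0"
    unfolding \<mu>_def by (rule LeastI_ex) (use bij in blast)
  have le\<mu>: "\<mu> \<le> j" if "b i j \<noteq> 0" for i j
    unfolding \<mu>_def by (rule Least_le) (use that in blast)
  define i0 where "i0 = (LEAST i. b i \<mu> \<noteq> 0)"
  have i0: "b i0 \<mu> \<noteq> 0" unfolding i0_def by (rule LeastI_ex) (rule ex\<mu>)
  have lei0: "i0 \<le> i" if "b i \<mu> \<noteq> 0" for i
    unfolding i0_def by (rule Least_le) (use that in blast)
  have "(real i0, real \<mu>) extreme_point_of NP"
  proof (rule lexmin_extreme[of b i0 \<mu> 0 1 1 0])
    show "b i0 \<mu> \<noteq> 0" by (rule i0)
    fix i j assume bij': "b i j \<noteq> 0"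
    show "0 * real i0 + 1 * real \<mu> < 0 * real i + 1 * real j \<or>
         0 * real i + 1 * real j = 0 * real i0 + 1 * real \<mu> \<and> 1 * real i0 + 0 * real \<mu> \<le> 1 * real i + 0 * real j"
    proof (cases "j = \<mu>")
      case True then show ?thesis using lei0 bij' by auto
    next
      case False then show ?thesis using le\<mu>[OF bij'] by auto
    qed
  qed auto
  then obtain k where k: "k \<in> {1..s}" "(real i0, real \<mu>) = (real (nv k), real (mv k))"
    using ext_only by blast
  then have "\<mu> = mv k" by simp
  then show ?thesis using vert_m[OF k(1)] le\<mu>[OF bij] by simp
qed

lemma F3: assumes bij: "b i j \<noteq> 0" and jm: "j > ma"
  shows "(real \<delta> - real mb) * real i + real nb * real j > real nb * real \<delta>"
proof (rule ccontr)
  assume "\<not> ?thesis"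
  then have eq: "(real \<delta> - real mb) * real i + real nb * real j = real nb * real \<delta>"
    using F2[OF bij] by simp
  define D where "D = real \<delta> - real mb"
  have Dp: "D > 0" using mb_lt_delta unfolding D_def by simp
  define u where "u = (real j - real ma) / (real j - real mb)"
  have jmb: "real j > real mb" using jm m2 by simp
  have u: "0 < u" "u < 1" unfolding u_def using jm m2 jmb by (auto simp: field_simps)
  define Q where "Q = (1 - u) *\<^sub>R (real i, real j) + u *\<^sub>R (real nb, real mb)"
  have um: "u * (real j - real mb) = real j - real ma" unfolding u_def using jmb by simp
  have sQ: "snd Q = real ma"
  proof -
    have "snd Q = real j - u * (real j - real mb)" unfolding Q_def by (simp add: algebra_simps)
    then show ?thesis using um by simp
  qed
  have "D * fst Q + real nb * snd Q = (1 - u) * (D * real i + real nb * real j) + u * (D * real nb + real nb * real mb)"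
    unfolding Q_def by (simp add: algebra_simps)
  also have "\<dots> = real nb * real \<delta>"
    using eq unfolding D_def by (simp add: algebra_simps)
  finally have "D * fst Q = D * real na"
    using sQ line_real unfolding D_def by (simp add: algebra_simps)
  then have fQ: "fst Q = real na" using Dp by simp
  have ne: "(real i, real j) \<noteq> (real nb, real mb)" using jmb by auto
  have "(real na, real ma) \<in> open_segment (real i, real j) (real nb, real mb)"
    unfolding in_segment using ne u fQ sQ unfolding Q_def by (auto simp: prod_eq_iff)
  moreover have "(real na, real ma) extreme_point_of NP" using ext[of "s-1"] s_gt by simp
  moreover have "(real i, real j) \<in> NP" by (rule np_support[of b i j, OF bij])
  moreover have "(real nb, real mb) \<in> NP" using ext_in[of s] s_gt by simp
  ultimately show False unfolding extreme_point_of_def by blast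
qed

end

context npd begin

definition "Dd = real \<delta> - real mb"
definition "\<alpha> = real nb / Dd"
definition "\<delta>2 = real \<delta> + 1 / real nb"

lemma Dd_pos: "Dd > 0" using mb_lt_delta unfolding Dd_def by simp
lemma alpha_pos: "\<alpha> > 0" using Dd_pos nb_pos unfolding \<alpha>_def by simp
lemma alpha_D: "\<alpha> * Dd = real nb" using Dd_pos unfolding \<alpha>_def by simp
lemma alpha_na: "\<alpha> * (real \<delta> - real ma) = real na"
proof -
  have "real na * Dd = real nb * (real \<delta> - real ma)" using line_real unfolding Dd_def by (simp add: algebra_simps)
  then show ?thesis unfolding \<alpha>_def using Dd_pos by (simp add: field_simps)
qed
lemma delta2_gt: "\<delta>2 > real \<delta>" using nb_pos unfolding \<delta>2_def by simp

lemma F3': assumes "b i j \<noteq> 0" "j > ma"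
  shows "Dd * real i + real nb * real j \<ge> real nb * real \<delta> + 1"
proof -
  have "real ((\<delta> - mb) * i + nb * j) > real (nb * \<delta>)"
    using F3[OF assms] mb_lt_delta by (simp add: of_nat_diff)
  then have "(\<delta> - mb) * i + nb * j \<ge> nb * \<delta> + 1" by linarith
  then have "real ((\<delta> - mb) * i + nb * j) \<ge> real (nb * \<delta> + 1)" by (simp only: of_nat_le_iff)
  then show ?thesis unfolding Dd_def using mb_lt_delta by (simp add: of_nat_diff)
qed

lemma F2': "b i j \<noteq> 0 \<Longrightarrow> Dd * real i + real nb * real j \<ge> real nb * real \<delta>"
  using F2 unfolding Dd_def by simp

lemma star_ineq:
  fixes X Y :: real
  assumes bij: "b i j \<noteq> 0" and X: "X \<le> 0" and Y: "Y \<le> 0"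
  shows "real i * X + real j * Y \<le> max (real nb * X + real mb * Y) (max (real na * X + real ma * Y) (\<delta>2 * Y))"
proof (cases "j \<le> ma")
  case True
  have jm: "j \<ge> mb" using F1[OF bij] .
  define t where "t = (real ma - real j) / (real ma - real mb)"
  have t: "0 \<le> t" "t \<le> 1" using True jm m2 unfolding t_def by (auto simp: field_simps)
  have tj: "real j = t * real mb + (1 - t) * real ma"
  proof -
    have "t * (real ma - real mb) = real ma - real j" unfolding t_def using m2 by simp
    then show ?thesis by (simp add: algebra_simps)
  qed
  have "Dd * (t * real nb + (1 - t) * real na) = real nb * (real \<delta> - real j)"
  proof -
    have "Dd * real na = real nb * (real \<delta> - real ma)" using alpha_na alpha_D
      by (metis mult.assoc mult.commute)
    have "Dd * (t * real nb + (1 - t) * real na) = t * real nb * Dd + (1 - t) * (Dd * real na)"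
      by (simp add: algebra_simps)
    also have "\<dots> = t * real nb * (real \<delta> - real mb) + (1 - t) * (real nb * (real \<delta> - real ma))"
      using \<open>Dd * real na = real nb * (real \<delta> - real ma)\<close> unfolding Dd_def by simp
    also have "\<dots> = real nb * (real \<delta> - (t * real mb + (1 - t) * real ma))"
      by (simp add: algebra_simps)
    finally show ?thesis using tj by simp
  qed
  moreover have "Dd * real i \<ge> real nb * (real \<delta> - real j)" using F2'[OF bij] by (simp add: algebra_simps)
  ultimately have "Dd * real i \<ge> Dd * (t * real nb + (1 - t) * real na)" by simp
  then have ii: "real i \<ge> t * real nb + (1 - t) * real na" using Dd_pos by simp
  have "real i * X \<le> (t * real nb + (1 - t) * real na) * X"
    using ii X by (simp add: mult_right_mono_neg)
  moreover have "real j * Y = (t * real mb + (1 - t) * real ma) * Y" using tj by simp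
  moreover have "t * (real nb * X + real mb * Y) + (1 - t) * (real na * X + real ma * Y)
     = (t * real nb + (1 - t) * real na) * X + (t * real mb + (1 - t) * real ma) * Y"
    by (simp add: algebra_simps)
  ultimately have "real i * X + real j * Y \<le> t * (real nb * X + real mb * Y) + (1 - t) * (real na * X + real ma * Y)"
    by linarith
  also have "\<dots> \<le> t * max (real nb * X + real mb * Y) (real na * X + real ma * Y)
                 + (1 - t) * max (real nb * X + real mb * Y) (real na * X + real ma * Y)"
    using t by (intro add_mono mult_left_mono) auto
  also have "\<dots> = max (real nb * X + real mb * Y) (real na * X + real ma * Y)"
    by (simp add: algebra_simps)
  finally show ?thesis unfolding le_max_iff_disj by blast
next
  case False
  then have jm: "j > ma" by simp
  have f3: "Dd * real i \<ge> real nb * (\<delta>2 - real j)"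
    using F3'[OF bij jm] nb_pos unfolding \<delta>2_def by (simp add: algebra_simps)
  show ?thesis
  proof (cases "real j \<ge> \<delta>2")
    case True
    have "real i * X \<le> 0" using X by (simp add: mult_nonneg_nonpos)
    moreover have "real j * Y \<le> \<delta>2 * Y" using True Y by (simp add: mult_right_mono_neg)
    ultimately show ?thesis by auto
  next
    case False
    define t where "t = (\<delta>2 - real j) / (\<delta>2 - real ma)"
    have jma: "real j > real ma" using jm by simp
    have t: "0 \<le> t" "t \<le> 1" using False jma unfolding t_def by (auto simp: field_simps)
    have tj: "real j = t * real ma + (1 - t) * \<delta>2"
    proof -
      have "t * (\<delta>2 - real ma) = \<delta>2 - real j" unfolding t_def using jma False by simp
      then show ?thesis by (simp add: algebra_simps)
    qed
    have "Dd * (t * real na) = t * (real nb * (real \<delta> - real ma))"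
      using alpha_na alpha_D by (metis mult.assoc mult.commute)
    also have "\<dots> \<le> t * (real nb * (\<delta>2 - real ma))"
      using t delta2_gt by (intro mult_left_mono) auto
    also have "\<dots> = real nb * (\<delta>2 - real j)"
    proof -
      have "t * (\<delta>2 - real ma) = \<delta>2 - real j" unfolding t_def using jma False by simp
      then show ?thesis by (metis mult.left_commute)
    qed
    finally have "Dd * (t * real na) \<le> Dd * real i" using f3 by simp
    then have ii: "t * real na \<le> real i" using Dd_pos by simp
    have "real i * X \<le> (t * real na) * X" using ii X by (simp add: mult_right_mono_neg)
    moreover have "real j * Y = (t * real ma + (1 - t) * \<delta>2) * Y" using tj by simp
    moreover have "t * (real na * X + real ma * Y) + (1 - t) * (\<delta>2 * Y)
       = (t * real na) * X + (t * real ma + (1 - t) * \<delta>2) * Y"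
      by (simp add: algebra_simps)
    ultimately have "real i * X + real j * Y \<le> t * (real na * X + real ma * Y) + (1 - t) * (\<delta>2 * Y)"
      by linarith
    also have "\<dots> \<le> t * max (real na * X + real ma * Y) (\<delta>2 * Y) + (1 - t) * max (real na * X + real ma * Y) (\<delta>2 * Y)"
      using t by (intro add_mono mult_left_mono) auto
    also have "\<dots> = max (real na * X + real ma * Y) (\<delta>2 * Y)" by (simp add: algebra_simps)
    finally show ?thesis unfolding le_max_iff_disj by blast
  qed
qed

lemma low_ineq:
  fixes X Y :: real
  assumes bij: "b i j \<noteq> 0" and ne: "(i, j) \<noteq> (nb, mb)" and X: "X \<le> 0" and U: "Y - \<alpha> * X \<le> 0"
  shows "real i * X + real j * Y \<le> real nb * X + real mb * Y + max X (Y - \<alpha> * X)"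
proof (cases "j = mb")
  case True
  have "Dd * real i \<ge> Dd * real nb"
    using F2'[OF bij] True unfolding Dd_def by (simp add: algebra_simps)
  then have "i \<ge> nb" using Dd_pos by simp
  then have "i \<ge> nb + 1" using ne True by auto
  then have "real i * X \<le> (real nb + 1) * X" using X by (simp add: mult_right_mono_neg)
  then show ?thesis using True by (simp add: algebra_simps)
next
  case False
  then have jm: "j \<ge> mb + 1" using F1[OF bij] by simp
  have "Dd * real i \<ge> Dd * (\<alpha> * (real \<delta> - real j))"
    using F2'[OF bij] alpha_D by (simp add: algebra_simps)
  then have ii: "real i \<ge> \<alpha> * (real \<delta> - real j)" using Dd_pos by simp
  have "real i * X \<le> \<alpha> * (real \<delta> - real j) * X" using ii X by (simp add: mult_right_mono_neg)
  moreover have "real j * (Y - \<alpha> * X) \<le> (real mb + 1) * (Y - \<alpha> * X)"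
    using jm U by (simp add: mult_right_mono_neg)
  moreover have "\<alpha> * real \<delta> * X + (real mb + 1) * (Y - \<alpha> * X) = real nb * X + real mb * Y + (Y - \<alpha> * X)"
    using alpha_D unfolding Dd_def by (simp add: algebra_simps)
  ultimately have "real i * X + real j * Y \<le> real nb * X + real mb * Y + (Y - \<alpha> * X)"
    by (simp add: algebra_simps)
  then show ?thesis by auto
qed

lemma zero_ineq: assumes "b 0 j \<noteq> 0" shows "j \<ge> \<delta> + 1"
proof -
  have "real nb * real j \<ge> real nb * real \<delta>" using F2'[OF assms] by simp
  then have "j \<ge> \<delta>" using nb_pos by simp
  then have "j > ma" using mb_lt_delta by simp
  have "real nb * real j \<ge> real nb * real \<delta> + 1" using F3'[OF assms \<open>j > ma\<close>] by simp
  then have "real nb * real j > real nb * real \<delta>" by simp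
  then have "j > \<delta>" using nb_pos by simp
  then show ?thesis by simp
qed

end

lemma conv_of_summable_diff:
  fixes f :: "nat \<Rightarrow> real"
  assumes "summable (\<lambda>n. f (Suc n) - f n)"
  shows "convergent f"
proof -
  have "(\<lambda>n. f 0 + (\<Sum>k<n. f (Suc k) - f k)) \<longlonglongrightarrow> f 0 + suminf (\<lambda>n. f (Suc n) - f n)"
    by (intro tendsto_add tendsto_const summable_LIMSEQ assms)
  moreover have "(\<lambda>n. f 0 + (\<Sum>k<n. f (Suc k) - f k)) = f"
    by (simp add: sum_lessThan_telescope)
  ultimately show ?thesis unfolding convergent_def by auto
qed

lemma geo_up:
  fixes Y :: "nat \<Rightarrow> real"
  assumes h: "\<And>n. n \<ge> N \<Longrightarrow> Y (Suc n) \<le> C + r * Y n" and r: "r > 1"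
  shows "Y (N + k) + C / (r - 1) \<le> r ^ k * (Y N + C / (r - 1))"
proof (induction k)
  case 0 then show ?case by simp
next
  case (Suc k)
  have "Y (N + Suc k) + C / (r - 1) \<le> C + r * Y (N + k) + C / (r - 1)"
    using h[of "N + k"] by simp
  also have "\<dots> = r * (Y (N + k) + C / (r - 1))"
    using r by (simp add: field_simps)
  also have "\<dots> \<le> r * (r ^ k * (Y N + C / (r - 1)))"
    using Suc r by (intro mult_left_mono) auto
  finally show ?case by simp
qed

lemma geo_low:
  fixes Y :: "nat \<Rightarrow> real"
  assumes h: "\<And>n. n \<ge> N \<Longrightarrow> Y (Suc n) \<ge> r * Y n - C" and r: "r > 1"
  shows "Y (N + k) - C / (r - 1) \<ge> r ^ k * (Y N - C / (r - 1))"
proof -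
  have "(\<lambda>n. - Y n) (N + k) + C / (r - 1) \<le> r ^ k * ((\<lambda>n. - Y n) N + C / (r - 1))"
    by (rule geo_up[where N = N]) (use h r in \<open>auto simp: algebra_simps\<close>)
  then show ?thesis by (simp add: algebra_simps)
qed

lemma green_seq:
  fixes X :: "nat \<Rightarrow> real" and \<delta> C :: real
  assumes d: "\<delta> > 1" and h: "\<And>n. n \<ge> N \<Longrightarrow> \<bar>X (Suc n) - \<delta> * X n\<bar> \<le> C"
    and lim: "filterlim X at_bot sequentially"
  shows "\<exists>G<0. (\<lambda>n. X n / \<delta> ^ n) \<longlonglongrightarrow> G"
proof -
  have C0: "C \<ge> 0" using h[of N] by linarith
  define g where "g = (\<lambda>k. X (k + N) / \<delta> ^ (k + N))"
  have dif: "norm (g (Suc k) - g k) \<le> (C / \<delta> ^ (N + 1)) * (1 / \<delta>) ^ k" for k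
  proof -
    have "g (Suc k) - g k = (X (Suc (k + N)) - \<delta> * X (k + N)) / \<delta> ^ (Suc (k + N))"
      unfolding g_def using d by (simp add: field_simps)
    then have "norm (g (Suc k) - g k) = \<bar>X (Suc (k + N)) - \<delta> * X (k + N)\<bar> / \<delta> ^ (Suc (k + N))"
      using d by simp
    also have "\<dots> \<le> C / \<delta> ^ (Suc (k + N))"
      using h[of "k + N"] d by (intro divide_right_mono) auto
    also have "\<dots> = (C / \<delta> ^ (N + 1)) * (1 / \<delta>) ^ k"
      using d by (simp add: power_add field_simps)
    finally show ?thesis .
  qed
  have "summable (\<lambda>k. (C / \<delta> ^ (N + 1)) * (1 / \<delta>) ^ k)"
    using d by (intro summable_mult summable_geometric) auto
  then have "summable (\<lambda>k. g (Suc k) - g k)"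
    by (rule summable_comparison_test'[where N = 0]) (use dif in auto)
  then have "convergent g" by (rule conv_of_summable_diff)
  then obtain G where gG: "g \<longlonglongrightarrow> G" unfolding convergent_def by auto
  then have XG: "(\<lambda>n. X n / \<delta> ^ n) \<longlonglongrightarrow> G"
    unfolding g_def by (rule LIMSEQ_offset)
  define K where "K = C / (\<delta> - 1)"
  have K0: "K \<ge> 0" unfolding K_def using C0 d by simp
  have "eventually (\<lambda>n. X n \<le> - K - 1) sequentially"
    using lim unfolding filterlim_at_bot by auto
  then obtain M0 where M0: "\<And>n. n \<ge> M0 \<Longrightarrow> X n \<le> - K - 1" unfolding eventually_sequentially by auto
  define M where "M = max M0 N"
  have hM: "\<And>n. n \<ge> M \<Longrightarrow> X (Suc n) \<le> C + \<delta> * X n" using h unfolding M_def by fastforce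
  have bnd: "X (M + k) / \<delta> ^ (M + k) \<le> - 1 / \<delta> ^ M" for k
  proof -
    have "X (M + k) + K \<le> \<delta> ^ k * (X M + K)"
      using geo_up[of M X C \<delta> k, OF hM d] unfolding K_def by simp
    also have "\<dots> \<le> \<delta> ^ k * (-1)"
      using M0[of M] d unfolding M_def by (intro mult_left_mono) auto
    finally have "X (M + k) \<le> -(\<delta> ^ k)" using K0 by simp
    then have "X (M + k) / \<delta> ^ (M + k) \<le> - (\<delta> ^ k) / \<delta> ^ (M + k)"
      using d by (intro divide_right_mono) auto
    also have "\<dots> = - 1 / \<delta> ^ M" using d by (simp add: power_add field_simps)
    finally show ?thesis .
  qed
  have "(\<lambda>k. X (k + M) / \<delta> ^ (k + M)) \<longlonglongrightarrow> G"
    using LIMSEQ_ignore_initial_segment[OF XG, of M] by simp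
  then have "G \<le> - 1 / \<delta> ^ M"
    by (rule LIMSEQ_le_const2) (use bnd in \<open>auto simp: add.commute\<close>)
  moreover have "1 / \<delta> ^ M > 0" using d by simp
  ultimately have "G < 0" by linarith
  then show ?thesis using XG by blast
qed

lemma descent:
  fixes v :: "nat \<Rightarrow> real"
  assumes k: "\<kappa> > 0"
    and h1: "\<And>n. n \<ge> N \<Longrightarrow> v n \<le> \<epsilon> \<Longrightarrow> v (Suc n) \<le> \<epsilon>"
    and h2: "\<And>n. n \<ge> N \<Longrightarrow> v n > \<epsilon> \<Longrightarrow> v (Suc n) \<le> v n - \<kappa>"
  shows "\<exists>M. \<forall>n\<ge>M. v n \<le> \<epsilon>"
proof -
  have "\<exists>n\<ge>N. v n \<le> \<epsilon>"
  proof (rule ccontr)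
    assume "\<not> ?thesis"
    then have gt: "\<And>n. n \<ge> N \<Longrightarrow> v n > \<epsilon>" by force
    have dec: "v (N + k) \<le> v N - real k * \<kappa>" for k
    proof (induction k)
      case 0 then show ?case by simp
    next
      case (Suc k)
      have "v (N + Suc k) \<le> v (N + k) - \<kappa>" using h2[of "N + k"] gt[of "N + k"] by simp
      then show ?case using Suc by (simp add: algebra_simps)
    qed
    obtain k where "real k > (v N - \<epsilon>) / \<kappa>" using reals_Archimedean2 by blast
    then have "real k * \<kappa> > v N - \<epsilon>" using k by (simp add: field_simps)
    then have "v (N + k) < \<epsilon>" using dec[of k] by simp
    then show False using gt[of "N + k"] by simp
  qed
  then obtain M where M: "M \<ge> N" "v M \<le> \<epsilon>" by blast
  have "v (M + k) \<le> \<epsilon>" for k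
  proof (induction k)
    case 0 then show ?case using M by simp
  next
    case (Suc k) then show ?case using h1[of "M + k"] M by simp
  qed
  then show ?thesis by (metis le_add_diff_inverse)
qed

lemma zero_case_seq:
  fixes Y :: "nat \<Rightarrow> real"
  assumes d: "\<delta> > 1" and h: "\<And>n. n \<ge> N \<Longrightarrow> Y (Suc n) \<le> C + (\<delta> + 1) * Y n"
    and C0: "C \<ge> 0" and lim: "filterlim Y at_bot sequentially"
  shows "filterlim (\<lambda>n. Y n / \<delta> ^ n) at_bot sequentially"
proof -
  define K where "K = C / \<delta>"
  have K0: "K \<ge> 0" unfolding K_def using C0 d by simp
  have "eventually (\<lambda>n. Y n \<le> - K - 1) sequentially"
    using lim unfolding filterlim_at_bot by auto
  then obtain M0 where M0: "\<And>n. n \<ge> M0 \<Longrightarrow> Y n \<le> - K - 1" unfolding eventually_sequentially by auto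
  define M where "M = max M0 N"
  have hM: "\<And>n. n \<ge> M \<Longrightarrow> Y (Suc n) \<le> C + (\<delta> + 1) * Y n" using h unfolding M_def by fastforce
  have bnd: "Y (M + k) \<le> -((\<delta> + 1) ^ k)" for k
  proof -
    have "Y (M + k) + K \<le> (\<delta> + 1) ^ k * (Y M + K)"
      using geo_up[of M Y C "\<delta> + 1" k, OF hM] d unfolding K_def by simp
    also have "\<dots> \<le> (\<delta> + 1) ^ k * (-1)"
      using M0[of M] d unfolding M_def by (intro mult_left_mono) auto
    finally show ?thesis using K0 by simp
  qed
  show ?thesis
    unfolding filterlim_at_bot eventually_sequentially
  proof
    fix Z :: real
    have q: "(\<delta> + 1) / \<delta> > 1" using d by simp
    obtain k0 where k0: "(max (- Z) 0) * (\<delta> + 1) ^ M < ((\<delta> + 1) / \<delta>) ^ k0"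
      using real_arch_pow[OF q] by blast
    show "\<exists>N. \<forall>n\<ge>N. Y n / \<delta> ^ n \<le> Z"
    proof (intro exI[of _ "M + k0"] allI impI)
      fix n assume n: "n \<ge> M + k0"
      define k where "k = n - M"
      have nk: "n = M + k" and kk: "k \<ge> k0" using n unfolding k_def by auto
      have "((\<delta> + 1) / \<delta>) ^ k0 \<le> ((\<delta> + 1) / \<delta>) ^ k"
        using q kk by (intro power_increasing) auto
      have "Y n / \<delta> ^ n \<le> - ((\<delta> + 1) ^ k) / \<delta> ^ n"
        using bnd[of k] nk d by (intro divide_right_mono) auto
      also have "\<dots> = -((((\<delta> + 1) / \<delta>) ^ n) / (\<delta> + 1) ^ M)"
      proof -
        have "((\<delta> + 1) / \<delta>) ^ n / (\<delta> + 1) ^ M = (\<delta> + 1) ^ (M + k) / (\<delta> ^ n * (\<delta> + 1) ^ M)"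
          using nk by (simp add: power_divide)
        also have "\<dots> = (\<delta> + 1) ^ k / \<delta> ^ n"
          using d by (simp add: power_add)
        finally show ?thesis by simp
      qed
      also have "\<dots> \<le> -((((\<delta> + 1) / \<delta>) ^ k) / (\<delta> + 1) ^ M)"
      proof -
        have "((\<delta> + 1) / \<delta>) ^ k \<le> ((\<delta> + 1) / \<delta>) ^ n"
          using q nk by (intro power_increasing) auto
        then have "((\<delta> + 1) / \<delta>) ^ k / (\<delta> + 1) ^ M \<le> ((\<delta> + 1) / \<delta>) ^ n / (\<delta> + 1) ^ M"
          using d by (intro divide_right_mono) auto
        then show ?thesis by linarith
      qed
      also have "\<dots> \<le> Z"
      proof -
        have "((\<delta> + 1) / \<delta>) ^ k > max (- Z) 0 * (\<delta> + 1) ^ M"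
          using k0 \<open>((\<delta> + 1) / \<delta>) ^ k0 \<le> ((\<delta> + 1) / \<delta>) ^ k\<close> by linarith
        then have "((\<delta> + 1) / \<delta>) ^ k / (\<delta> + 1) ^ M > max (- Z) 0"
          using d by (simp only: pos_less_divide_eq[of "(\<delta> + 1) ^ M"] zero_less_power)
        then show ?thesis by linarith
      qed
      finally show "Y n / \<delta> ^ n \<le> Z" .
    qed
  qed
qed

lemma pow_big:
  fixes \<delta> :: real assumes "\<delta> > 1" shows "\<exists>n0. \<forall>n\<ge>n0. B \<le> \<delta> ^ n"
proof -
  obtain n0 where "B < \<delta> ^ n0" using real_arch_pow[OF assms] by blast
  then have "\<forall>n\<ge>n0. B \<le> \<delta> ^ n"
    using assms by (meson less_imp_le order.trans power_increasing less_imp_le)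
  then show ?thesis by blast
qed

lemma ev_pow_big:
  fixes \<delta> :: real assumes "\<delta> > 1" shows "eventually (\<lambda>n. B \<le> \<delta> ^ n) sequentially"
  using pow_big[OF assms] unfolding eventually_sequentially by blast

lemma dyn_upper:
  fixes X Y U :: "nat \<Rightarrow> real" and \<delta> \<alpha> mb ma \<delta>2 C1 c :: real
  assumes d: "\<delta> > 1" and mm: "0 \<le> mb" "mb < ma" "ma < \<delta>" "\<delta> < \<delta>2" and c: "c > 0"
    and hU: "\<And>n. n \<ge> N \<Longrightarrow> U (Suc n) \<le> C1 + max (mb * U n) (max (ma * U n) (\<delta> * U n - (\<delta>2 - \<delta>) * c * \<delta> ^ n))"
    and eps: "\<epsilon> > 0"
  shows "\<exists>M. \<forall>n\<ge>M. U n \<le> \<epsilon> * \<delta> ^ n"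
proof -
  define c' where "c' = (\<delta>2 - \<delta>) * c"
  have c'p: "c' > 0" unfolding c'_def using mm c by simp
  define \<kappa>0 where "\<kappa>0 = min ((\<delta> - ma) * \<epsilon>) c'"
  have k0: "\<kappa>0 > 0" unfolding \<kappa>0_def using mm eps c'p by simp
  have k1: "\<kappa>0 \<le> (\<delta> - ma) * \<epsilon>" "\<kappa>0 \<le> c'" unfolding \<kappa>0_def by auto
  obtain N5' where N5': "\<And>n. n \<ge> N5' \<Longrightarrow> 2 * \<bar>C1\<bar> / \<kappa>0 \<le> \<delta> ^ n" using pow_big[OF d] by blast
  define N5 where "N5 = max N N5'"
  have C1b: "C1 \<le> (\<kappa>0 / 2) * \<delta> ^ n" if "n \<ge> N5" for n
  proof -
    have "2 * \<bar>C1\<bar> / \<kappa>0 \<le> \<delta> ^ n" using N5' that unfolding N5_def by auto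
    then have "2 * \<bar>C1\<bar> \<le> \<kappa>0 * \<delta> ^ n" using k0 by (simp add: field_simps)
    then show ?thesis by simp
  qed
  have hU': "U (Suc n) \<le> C1 + max (mb * U n) (max (ma * U n) (\<delta> * U n - c' * \<delta> ^ n))" if "n \<ge> N5" for n
    using hU[of n] that unfolding N5_def c'_def by auto
  define v where "v = (\<lambda>n. U n / \<delta> ^ n)"
  define \<kappa> where "\<kappa> = \<kappa>0 / (2 * \<delta>)"
  have kp: "\<kappa> > 0" unfolding \<kappa>_def using k0 d by simp
  have dp: "\<delta> ^ n > 0" for n using d by simp
  have step1: "v (Suc n) \<le> \<epsilon>" if n: "n \<ge> N5" and vn: "v n \<le> \<epsilon>" for n
  proof -
    have Un: "U n \<le> \<epsilon> * \<delta> ^ n" using vn dp[of n] unfolding v_def by (simp add: field_simps)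
    have cb: "C1 \<le> (\<kappa>0 / 2) * \<delta> ^ n" by (rule C1b[OF n])
    have kk: "(\<kappa>0 / 2) * \<delta> ^ n \<le> ((\<delta> - ma) * \<epsilon>) * \<delta> ^ n" "(\<kappa>0 / 2) * \<delta> ^ n \<le> c' * \<delta> ^ n"
      using k1 k0 dp[of n] by (intro mult_right_mono; simp)+
    have "U (Suc n) \<le> \<epsilon> * \<delta> ^ Suc n"
    proof (cases "U n \<le> 0")
      case True
      have "mb * U n \<le> 0" using True mm by (simp add: mult_nonneg_nonpos)
      moreover have "ma * U n \<le> 0" using True mm by (simp add: mult_nonneg_nonpos)
      moreover have "\<delta> * U n \<le> 0" using True d by (simp add: mult_nonneg_nonpos)
      moreover have "c' * \<delta> ^ n \<ge> 0" using c'p dp[of n] by simp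
      moreover have "\<epsilon> * \<delta> ^ Suc n \<ge> ((\<delta> - ma) * \<epsilon>) * \<delta> ^ n"
        using mm eps dp[of n] by (simp add: algebra_simps)
      ultimately have "max (mb * U n) (max (ma * U n) (\<delta> * U n - c' * \<delta> ^ n)) \<le> \<epsilon> * \<delta> ^ Suc n - C1"
        using cb kk by (intro max.boundedI) linarith+
      then show ?thesis using hU'[OF n] by linarith
    next
      case False
      have "mb * U n \<le> ma * U n" using False mm by (intro mult_right_mono) auto
      moreover have "ma * U n \<le> ma * (\<epsilon> * \<delta> ^ n)" using Un mm by (intro mult_left_mono) auto
      moreover have "\<delta> * U n \<le> \<delta> * (\<epsilon> * \<delta> ^ n)" using Un d by (intro mult_left_mono) auto
      moreover have "\<epsilon> * \<delta> ^ Suc n = \<delta> * (\<epsilon> * \<delta> ^ n)" by simp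
      moreover have "ma * (\<epsilon> * \<delta> ^ n) + ((\<delta> - ma) * \<epsilon>) * \<delta> ^ n = \<delta> * (\<epsilon> * \<delta> ^ n)"
        by (simp add: algebra_simps)
      ultimately have "max (mb * U n) (max (ma * U n) (\<delta> * U n - c' * \<delta> ^ n)) \<le> \<epsilon> * \<delta> ^ Suc n - C1"
        using cb kk by (intro max.boundedI) linarith+
      then show ?thesis using hU'[OF n] by linarith
    qed
    then show ?thesis unfolding v_def using dp[of "Suc n"] by (simp add: field_simps)
  qed
  have step2: "v (Suc n) \<le> v n - \<kappa>" if n: "n \<ge> N5" and vn: "v n > \<epsilon>" for n
  proof -
    have Un: "U n > \<epsilon> * \<delta> ^ n" using vn dp[of n] unfolding v_def by (simp add: field_simps)
    have Upos: "U n > 0" using Un eps dp[of n] by (smt (verit) mult_pos_pos)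
    have cb: "C1 \<le> (\<kappa>0 / 2) * \<delta> ^ n" by (rule C1b[OF n])
    have kk: "\<kappa>0 * \<delta> ^ n \<le> ((\<delta> - ma) * \<epsilon>) * \<delta> ^ n" "\<kappa>0 * \<delta> ^ n \<le> c' * \<delta> ^ n"
      using k1 k0 dp[of n] by (intro mult_right_mono; simp)+
    have "mb * U n \<le> ma * U n" using Upos mm by (intro mult_right_mono) auto
    moreover have "(\<delta> - ma) * U n \<ge> (\<delta> - ma) * (\<epsilon> * \<delta> ^ n)" using Un mm by (intro mult_left_mono) auto
    moreover have "ma * U n = \<delta> * U n - (\<delta> - ma) * U n" by (simp add: algebra_simps)
    moreover have "(\<delta> - ma) * (\<epsilon> * \<delta> ^ n) = ((\<delta> - ma) * \<epsilon>) * \<delta> ^ n" by simp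
    ultimately have "max (mb * U n) (max (ma * U n) (\<delta> * U n - c' * \<delta> ^ n)) \<le> \<delta> * U n - \<kappa>0 * \<delta> ^ n"
      using kk by (intro max.boundedI) linarith+
    then have "U (Suc n) \<le> \<delta> * U n - (\<kappa>0 / 2) * \<delta> ^ n"
      using hU'[OF n] cb by linarith
    then have "U (Suc n) / \<delta> ^ Suc n \<le> (\<delta> * U n - (\<kappa>0 / 2) * \<delta> ^ n) / \<delta> ^ Suc n"
      using dp[of "Suc n"] by (intro divide_right_mono) auto
    also have "\<dots> = U n / \<delta> ^ n - \<kappa>"
      unfolding \<kappa>_def using d by (simp add: field_simps)
    finally show ?thesis unfolding v_def .
  qed
  obtain M where M: "\<forall>n\<ge>M. v n \<le> \<epsilon>"
    using descent[of \<kappa> N5 v \<epsilon>, OF kp step1 step2] by blast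
  have "\<forall>n\<ge>M. U n \<le> \<epsilon> * \<delta> ^ n"
  proof (intro allI impI)
    fix n assume "n \<ge> M"
    then have "v n \<le> \<epsilon>" using M by simp
    then show "U n \<le> \<epsilon> * \<delta> ^ n" using dp[of n] unfolding v_def by (simp add: field_simps)
  qed
  then show ?thesis by blast
qed

lemma dyn_Ybound:
  fixes X Y :: "nat \<Rightarrow> real" and \<delta> \<delta>2 C \<gamma> :: real
  assumes d: "\<delta> > 1" "\<delta> < \<delta>2" and g: "\<gamma> > 0" and C0: "C \<ge> 0"
    and hY: "\<And>n. n \<ge> N \<Longrightarrow> Y (Suc n) \<le> C + max (X n) (\<delta>2 * Y n)"
    and hX: "\<And>n. n \<ge> N \<Longrightarrow> X n \<le> - \<gamma> * \<delta> ^ n"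
    and Ylim: "filterlim Y at_bot sequentially"
  shows "\<exists>c>0. \<exists>N1. \<forall>n\<ge>N1. Y n \<le> - c * \<delta> ^ n"
proof -
  define c where "c = \<gamma> / (2 * \<delta>2)"
  have d2: "\<delta>2 > 1" using d by simp
  have cp: "c > 0" unfolding c_def using g d2 by simp
  have c2: "\<delta>2 * c = \<gamma> / 2" unfolding c_def using d2 by simp
  have c3: "c * \<delta> \<le> \<gamma> / 2"
  proof -
    have "c * \<delta> \<le> c * \<delta>2" using cp d by simp
    then show ?thesis using c2 by (simp add: mult.commute)
  qed
  have dp: "\<delta> ^ n > 0" for n using d by simp
  obtain N3a where N3a: "\<And>n. n \<ge> N3a \<Longrightarrow> 2 * C / \<gamma> \<le> \<delta> ^ n" using pow_big[OF d(1)] by blast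
  obtain N3b where N3b: "\<And>n. n \<ge> N3b \<Longrightarrow> C / ((\<delta>2 - \<delta>) * c) \<le> \<delta> ^ n" using pow_big[OF d(1)] by blast
  define M where "M = max N (max N3a N3b)"
  have Ca: "C \<le> (\<gamma> / 2) * \<delta> ^ n" if "n \<ge> M" for n
    using N3a[of n] that g unfolding M_def by (simp add: field_simps)
  have Cb: "C \<le> ((\<delta>2 - \<delta>) * c) * \<delta> ^ n" if "n \<ge> M" for n
  proof -
    have "(\<delta>2 - \<delta>) * c > 0" using d cp by simp
    then show ?thesis using N3b[of n] that unfolding M_def by (simp add: field_simps)
  qed
  have ex: "\<exists>n1\<ge>M. Y n1 \<le> - c * \<delta> ^ n1"
  proof (rule ccontr)
    assume "\<not> ?thesis"
    then have gt: "\<And>n. n \<ge> M \<Longrightarrow> Y n > - c * \<delta> ^ n" by force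
    have rec: "Y (Suc n) \<le> C + \<delta>2 * Y n" if n: "n \<ge> M" for n
    proof -
      have "\<delta>2 * Y n > \<delta>2 * (- c * \<delta> ^ n)" using gt[OF n] d2 by (intro mult_strict_left_mono) auto
      moreover have "\<delta>2 * (- c * \<delta> ^ n) = - (\<gamma> / 2) * \<delta> ^ n" using c2 by (simp add: algebra_simps)
      moreover have "- (\<gamma> / 2) * \<delta> ^ n \<ge> - \<gamma> * \<delta> ^ n" using g dp[of n] by simp
      moreover have "X n \<le> - \<gamma> * \<delta> ^ n" using hX[of n] n unfolding M_def by simp
      ultimately have "X n \<le> \<delta>2 * Y n" by linarith
      then show ?thesis using hY[of n] n unfolding M_def by simp
    qed
    define K where "K = C / (\<delta>2 - 1)"
    have K0: "K \<ge> 0" unfolding K_def using C0 d2 by simp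
    obtain n2' where n2': "\<And>n. n \<ge> n2' \<Longrightarrow> Y n \<le> - K - 1"
      using Ylim unfolding filterlim_at_bot eventually_sequentially by blast
    define n2 where "n2 = max n2' M"
    have rec2: "\<And>n. n \<ge> n2 \<Longrightarrow> Y (Suc n) \<le> C + \<delta>2 * Y n" using rec unfolding n2_def by simp
    have bnd: "Y (n2 + k) \<le> - (\<delta>2 ^ k)" for k
    proof -
      have "Y (n2 + k) + K \<le> \<delta>2 ^ k * (Y n2 + K)"
        using geo_up[of n2 Y C \<delta>2 k, OF rec2 d2] unfolding K_def by simp
      also have "\<dots> \<le> \<delta>2 ^ k * (-1)"
        using n2'[of n2] d2 unfolding n2_def by (intro mult_left_mono) auto
      finally show ?thesis using K0 by simp
    qed
    have q: "\<delta>2 / \<delta> > 1" using d by simp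
    obtain k where k: "c * \<delta> ^ n2 < (\<delta>2 / \<delta>) ^ k" using real_arch_pow[OF q] by blast
    have "- c * \<delta> ^ (n2 + k) < Y (n2 + k)" using gt[of "n2 + k"] unfolding n2_def by simp
    then have "- c * \<delta> ^ (n2 + k) < - (\<delta>2 ^ k)" using bnd[of k] by simp
    then have "\<delta>2 ^ k < c * \<delta> ^ n2 * \<delta> ^ k" by (simp add: power_add)
    moreover have "(\<delta>2 / \<delta>) ^ k * \<delta> ^ k = \<delta>2 ^ k" using d by (simp add: power_divide)
    moreover have "c * \<delta> ^ n2 * \<delta> ^ k < (\<delta>2 / \<delta>) ^ k * \<delta> ^ k"
      using k dp[of k] by (intro mult_strict_right_mono) auto
    ultimately show False by simp
  qed
  then obtain n1 where n1: "n1 \<ge> M" "Y n1 \<le> - c * \<delta> ^ n1" by blast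
  have inv: "Y (Suc n) \<le> - c * \<delta> ^ Suc n" if n: "n \<ge> M" and Yn: "Y n \<le> - c * \<delta> ^ n" for n
  proof -
    have a1: "X n \<le> - \<gamma> * \<delta> ^ n" using hX[of n] n unfolding M_def by simp
    have a2: "\<delta>2 * Y n \<le> - (\<gamma> / 2) * \<delta> ^ n"
    proof -
      have "\<delta>2 * Y n \<le> \<delta>2 * (- c * \<delta> ^ n)" using Yn d2 by (intro mult_left_mono) auto
      moreover have "\<delta>2 * (- c * \<delta> ^ n) = - (\<gamma> / 2) * \<delta> ^ n" using c2 by (simp add: algebra_simps)
      ultimately show ?thesis by linarith
    qed
    have a3: "c * \<delta> ^ Suc n \<le> (\<gamma> / 2) * \<delta> ^ n"
      using mult_right_mono[OF c3, of "\<delta> ^ n"] dp[of n] by (simp add: algebra_simps)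
    have a4: "c * \<delta> ^ Suc n = c * \<delta>2 * \<delta> ^ n - ((\<delta>2 - \<delta>) * c) * \<delta> ^ n" by (simp add: algebra_simps)
    have "max (X n) (\<delta>2 * Y n) \<le> - c * \<delta> ^ Suc n - C"
    proof (intro max.boundedI)
      show "X n \<le> - c * \<delta> ^ Suc n - C" using a1 a3 Ca[OF n] by (simp add: algebra_simps)
      have "- (c * \<delta>2) * \<delta> ^ n = - (\<gamma> / 2) * \<delta> ^ n" using c2 by (simp add: algebra_simps)
      then have "\<delta>2 * Y n \<le> - (c * \<delta>2) * \<delta> ^ n" using a2 by linarith
      then show "\<delta>2 * Y n \<le> - c * \<delta> ^ Suc n - C" using a4 Cb[OF n] by (simp add: algebra_simps)
    qed
    moreover have "Y (Suc n) \<le> C + max (X n) (\<delta>2 * Y n)" using hY[of n] n unfolding M_def by simp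
    ultimately show ?thesis by linarith
  qed
  have "Y (n1 + k) \<le> - c * \<delta> ^ (n1 + k)" for k
  proof (induction k)
    case 0 then show ?case using n1 by simp
  next
    case (Suc k) then show ?case using inv[of "n1 + k"] n1 by simp
  qed
  then have "\<forall>n\<ge>n1. Y n \<le> - c * \<delta> ^ n" by (metis le_add_diff_inverse)
  then show ?thesis using cp by blast
qed

lemma dyn_lower:
  fixes U :: "nat \<Rightarrow> real" and \<delta> mb C1 l\<epsilon> \<epsilon> :: real
  assumes d: "\<delta> > 1" and mb: "mb \<ge> 2" "mb < \<delta>" and C1: "C1 \<ge> 0" and eps: "\<epsilon> > 0"
    and hU: "\<And>n. n \<ge> N \<Longrightarrow> U n < 0 \<Longrightarrow> U (Suc n) \<le> C1 + mb * U n"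
    and hL: "\<And>n. n \<ge> N \<Longrightarrow> U n \<le> l\<epsilon> \<Longrightarrow> U (Suc n) \<ge> mb * U n - C1"
  shows "\<exists>M. \<forall>n\<ge>M. U n \<ge> - \<epsilon> * \<delta> ^ n"
proof -
  define K where "K = C1 + max (- l\<epsilon>) 0 + 1"
  have Kp: "K > 0" "K \<ge> C1" "- K \<le> l\<epsilon>" unfolding K_def using C1 by auto
  have dp: "\<delta> ^ n > 0" for n using d by simp
  show ?thesis
  proof (cases "\<forall>n\<ge>N. U n > - K")
    case True
    obtain M where M: "\<And>n. n \<ge> M \<Longrightarrow> K / \<epsilon> \<le> \<delta> ^ n" using pow_big[OF d] by blast
    have "\<forall>n\<ge>max N M. U n \<ge> - \<epsilon> * \<delta> ^ n"
    proof (intro allI impI)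
      fix n assume n: "n \<ge> max N M"
      have "K \<le> \<epsilon> * \<delta> ^ n" using M[of n] n eps by (simp add: field_simps)
      then show "U n \<ge> - \<epsilon> * \<delta> ^ n" using True n by force
    qed
    then show ?thesis by blast
  next
    case False
    then obtain n1 where n1: "n1 \<ge> N" "U n1 \<le> - K" by force
    have absorb: "U (Suc n) \<le> - K" if "n \<ge> N" "U n \<le> - K" for n
    proof -
      have "U n < 0" using that Kp by simp
      then have "mb * U n \<le> 2 * U n" using mb by (intro mult_right_mono_neg) auto
      then show ?thesis using hU[OF that(1) \<open>U n < 0\<close>] that Kp by linarith
    qed
    have allK: "U (n1 + k) \<le> - K" for k
    proof (induction k)
      case 0 then show ?case using n1 by simp
    next
      case (Suc k) then show ?case using absorb[of "n1 + k"] n1 by simp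
    qed
    have hL': "U (Suc n) \<ge> mb * U n - C1" if "n \<ge> n1" for n
    proof -
      have "U n \<le> - K" using allK[of "n - n1"] that by simp
      then show ?thesis using hL[of n] that n1 Kp by simp
    qed
    have mb1: "mb > 1" using mb by simp
    define B where "B = C1 / (mb - 1) - U n1"
    have "C1 / (mb - 1) \<ge> 0" using C1 mb1 by simp
    then have B0: "B \<ge> 0" unfolding B_def using n1 Kp by linarith
    have lowk: "U (n1 + k) \<ge> - (mb ^ k * B)" for k
    proof -
      have "U (n1 + k) - C1 / (mb - 1) \<ge> mb ^ k * (U n1 - C1 / (mb - 1))"
        by (rule geo_low[of n1 mb U C1, OF hL' mb1])
      moreover have "C1 / (mb - 1) \<ge> 0" using C1 mb1 by simp
      ultimately show ?thesis unfolding B_def by (simp add: algebra_simps)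
    qed
    have q: "\<delta> / mb > 1" using mb by simp
    obtain k0 where k0: "B / (\<epsilon> * \<delta> ^ n1) < (\<delta> / mb) ^ k0" using real_arch_pow[OF q] by blast
    have "\<forall>n\<ge>n1 + k0. U n \<ge> - \<epsilon> * \<delta> ^ n"
    proof (intro allI impI)
      fix n assume n: "n \<ge> n1 + k0"
      define k where "k = n - n1"
      have nk: "n = n1 + k" and kk: "k \<ge> k0" using n unfolding k_def by auto
      have "(\<delta> / mb) ^ k0 \<le> (\<delta> / mb) ^ k" using q kk by (intro power_increasing) auto
      then have "B / (\<epsilon> * \<delta> ^ n1) \<le> (\<delta> / mb) ^ k" using k0 by simp
      then have "B \<le> (\<delta> / mb) ^ k * (\<epsilon> * \<delta> ^ n1)" using eps dp[of n1] by (simp add: field_simps)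
      then have "mb ^ k * B \<le> mb ^ k * ((\<delta> / mb) ^ k * (\<epsilon> * \<delta> ^ n1))"
        using mb by (intro mult_left_mono) auto
      also have "\<dots> = \<epsilon> * \<delta> ^ n"
        using mb nk by (simp add: power_divide power_add)
      finally show "U n \<ge> - \<epsilon> * \<delta> ^ n" using lowk[of k] nk by simp
    qed
    then show ?thesis by blast
  qed
qed

lemma dyn_main:
  fixes X Y :: "nat \<Rightarrow> real" and \<delta> \<alpha> nb mb na ma \<delta>t C l\<epsilon> :: real
  assumes d: "\<delta> > 1" and al: "\<alpha> > 0" and nb1: "nb \<ge> 1" and na1: "na \<ge> 1" and mb2: "mb \<ge> 2"
    and mm: "mb < ma" "ma < \<delta>" "\<delta> < \<delta>t"
    and nbe: "nb = \<alpha> * (\<delta> - mb)" and nae: "na = \<alpha> * (\<delta> - ma)"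
    and hX: "\<And>n. n \<ge> N \<Longrightarrow> \<bar>X (Suc n) - \<delta> * X n\<bar> \<le> C"
    and negX: "\<And>n. n \<ge> N \<Longrightarrow> X n \<le> 0" and negY: "\<And>n. n \<ge> N \<Longrightarrow> Y n \<le> 0"
    and hup: "\<And>n. n \<ge> N \<Longrightarrow> Y (Suc n) \<le> C + max (nb * X n + mb * Y n) (max (na * X n + ma * Y n) (\<delta>t * Y n))"
    and hlow: "\<And>n. n \<ge> N \<Longrightarrow> X n \<le> l\<epsilon> \<Longrightarrow> Y n - \<alpha> * X n \<le> l\<epsilon> \<Longrightarrow> Y (Suc n) \<ge> nb * X n + mb * Y n - C"
    and Xlim: "filterlim X at_bot sequentially" and Ylim: "filterlim Y at_bot sequentially"
  shows "\<exists>G<0. (\<lambda>n. X n / \<delta> ^ n) \<longlonglongrightarrow> G \<and> (\<lambda>n. Y n / \<delta> ^ n) \<longlonglongrightarrow> \<alpha> * G"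
proof -
  obtain G where G: "G < 0" and XG: "(\<lambda>n. X n / \<delta> ^ n) \<longlonglongrightarrow> G"
    using green_seq[OF d hX Xlim] by blast
  have C0: "C \<ge> 0" using hX[of N] by linarith
  define U where "U = (\<lambda>n. Y n - \<alpha> * X n)"
  define C1 where "C1 = C * (1 + \<alpha>)"
  have C10: "C1 \<ge> 0" unfolding C1_def using C0 al by simp
  have dp: "\<delta> ^ n > 0" for n using d by simp
  have i1: "nb * X n + mb * Y n - \<alpha> * \<delta> * X n = mb * U n" for n
    unfolding U_def nbe by (simp add: algebra_simps)
  have i2: "na * X n + ma * Y n - \<alpha> * \<delta> * X n = ma * U n" for n
    unfolding U_def nae by (simp add: algebra_simps)
  have i3: "\<delta>t * Y n - \<alpha> * \<delta> * X n = \<delta>t * U n + (\<delta>t - \<delta>) * (\<alpha> * X n)" for n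
    unfolding U_def by (simp add: algebra_simps)
  have aXs: "\<alpha> * X (Suc n) \<ge> \<alpha> * \<delta> * X n - \<alpha> * C" "\<alpha> * X (Suc n) \<le> \<alpha> * \<delta> * X n + \<alpha> * C"
    if "n \<ge> N" for n
  proof -
    have "X (Suc n) \<ge> \<delta> * X n - C" "X (Suc n) \<le> \<delta> * X n + C" using hX[OF that] by linarith+
    then have "\<alpha> * X (Suc n) \<ge> \<alpha> * (\<delta> * X n - C)" "\<alpha> * X (Suc n) \<le> \<alpha> * (\<delta> * X n + C)"
      using al by (intro mult_left_mono; simp)+
    then show "\<alpha> * X (Suc n) \<ge> \<alpha> * \<delta> * X n - \<alpha> * C" "\<alpha> * X (Suc n) \<le> \<alpha> * \<delta> * X n + \<alpha> * C"
      by (simp_all add: algebra_simps)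
  qed
  have hUgen: "U (Suc n) \<le> C1 + max (mb * U n) (max (ma * U n) (\<delta>t * U n + (\<delta>t - \<delta>) * (\<alpha> * X n)))"
    if n: "n \<ge> N" for n
  proof -
    have mx: "max A1 (max A2 A3) - t = max (A1 - t) (max (A2 - t) (A3 - t))" for A1 A2 A3 t :: real
      by (simp add: max_def)
    have "U (Suc n) \<le> C + max (nb * X n + mb * Y n) (max (na * X n + ma * Y n) (\<delta>t * Y n)) - (\<alpha> * \<delta> * X n - \<alpha> * C)"
      using hup[OF n] aXs(1)[OF n] unfolding U_def by linarith
    also have "\<dots> = C1 + (max (nb * X n + mb * Y n) (max (na * X n + ma * Y n) (\<delta>t * Y n)) - \<alpha> * \<delta> * X n)"
      unfolding C1_def by (simp add: algebra_simps)
    also have "\<dots> = C1 + max (mb * U n) (max (ma * U n) (\<delta>t * U n + (\<delta>t - \<delta>) * (\<alpha> * X n)))"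
      unfolding mx i1 i2 i3 ..
    finally show ?thesis .
  qed
  have hY': "Y (Suc n) \<le> C + max (X n) (\<delta>t * Y n)" if n: "n \<ge> N" for n
  proof -
    have "(nb - 1) * X n \<le> 0" using nb1 negX[OF n] by (simp add: mult_nonneg_nonpos)
    moreover have "(na - 1) * X n \<le> 0" using na1 negX[OF n] by (simp add: mult_nonneg_nonpos)
    moreover have "mb * Y n \<le> 0" using mb2 negY[OF n] by (simp add: mult_nonneg_nonpos)
    moreover have "ma * Y n \<le> 0" using mb2 mm negY[OF n] by (simp add: mult_nonneg_nonpos)
    ultimately have "nb * X n + mb * Y n \<le> X n" "na * X n + ma * Y n \<le> X n" by (simp_all add: algebra_simps)
    then have "max (nb * X n + mb * Y n) (max (na * X n + ma * Y n) (\<delta>t * Y n)) \<le> max (X n) (\<delta>t * Y n)"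
      by (simp add: max_def)
    then show ?thesis using hup[OF n] by linarith
  qed
  define \<gamma> where "\<gamma> = - G / 2"
  have gp: "\<gamma> > 0" unfolding \<gamma>_def using G by simp
  have "eventually (\<lambda>n. X n / \<delta> ^ n < G / 2) sequentially"
    by (rule order_tendstoD(2)[OF XG]) (use G in simp)
  then obtain Ng where Ng: "\<And>n. n \<ge> Ng \<Longrightarrow> X n / \<delta> ^ n < G / 2" unfolding eventually_sequentially by blast
  have hXg: "X n \<le> - \<gamma> * \<delta> ^ n" if "n \<ge> max N Ng" for n
  proof -
    have "X n / \<delta> ^ n < G / 2" using Ng that by simp
    then have "X n < G / 2 * \<delta> ^ n" using dp[of n] by (simp add: field_simps)
    then show ?thesis unfolding \<gamma>_def by simp
  qed
  obtain c N1 where cp: "c > 0" and N1: "\<And>n. n \<ge> N1 \<Longrightarrow> Y n \<le> - c * \<delta> ^ n"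
    using dyn_Ybound[of \<delta> \<delta>t \<gamma> C "max N Ng" Y X, OF d(1) mm(3) gp C0 _ hXg Ylim] hY' by auto
  have hU2: "U (Suc n) \<le> C1 + max (mb * U n) (max (ma * U n) (\<delta> * U n - (\<delta>t - \<delta>) * c * \<delta> ^ n))"
    if n: "n \<ge> max N N1" for n
  proof -
    have "\<alpha> * X n \<le> - c * \<delta> ^ n - U n" using N1[of n] n unfolding U_def by simp
    then have "(\<delta>t - \<delta>) * (\<alpha> * X n) \<le> (\<delta>t - \<delta>) * (- c * \<delta> ^ n - U n)"
      using mm by (intro mult_left_mono) auto
    then have "\<delta>t * U n + (\<delta>t - \<delta>) * (\<alpha> * X n) \<le> \<delta> * U n - (\<delta>t - \<delta>) * c * \<delta> ^ n"
      by (simp add: algebra_simps)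
    then have "max (mb * U n) (max (ma * U n) (\<delta>t * U n + (\<delta>t - \<delta>) * (\<alpha> * X n)))
        \<le> max (mb * U n) (max (ma * U n) (\<delta> * U n - (\<delta>t - \<delta>) * c * \<delta> ^ n))"
      by (simp add: max_def)
    then show ?thesis using hUgen[of n] n by linarith
  qed
  have upper: "\<exists>M. \<forall>n\<ge>M. U n \<le> \<epsilon> * \<delta> ^ n" if "\<epsilon> > 0" for \<epsilon>
    by (rule dyn_upper[where N = "max N N1", OF d _ mm cp hU2 that]) (use mb2 in auto)
  have hUneg: "U (Suc n) \<le> C1 + mb * U n" if n: "n \<ge> N" and Un: "U n < 0" for n
  proof -
    have "ma * U n \<le> mb * U n" using mm Un by (intro mult_right_mono_neg) auto
    moreover have "\<delta>t * U n \<le> mb * U n" using mm Un by (intro mult_right_mono_neg) auto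
    moreover have "(\<delta>t - \<delta>) * (\<alpha> * X n) \<le> 0"
      using mm al negX[OF n] by (intro mult_nonneg_nonpos) (auto simp: mult_nonneg_nonpos)
    ultimately have "max (mb * U n) (max (ma * U n) (\<delta>t * U n + (\<delta>t - \<delta>) * (\<alpha> * X n))) \<le> mb * U n"
      by (simp add: max_def)
    then show ?thesis using hUgen[OF n] by linarith
  qed
  obtain Nl where Nl: "\<And>n. n \<ge> Nl \<Longrightarrow> X n \<le> l\<epsilon>"
    using Xlim unfolding filterlim_at_bot eventually_sequentially by blast
  have hL: "U (Suc n) \<ge> mb * U n - C1" if n: "n \<ge> max N Nl" and Un: "U n \<le> l\<epsilon>" for n
  proof -
    have "Y (Suc n) \<ge> nb * X n + mb * Y n - C" using hlow[of n] n Nl[of n] Un unfolding U_def by simp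
    then have "U (Suc n) \<ge> nb * X n + mb * Y n - C - (\<alpha> * \<delta> * X n + \<alpha> * C)"
      using aXs(2)[of n] n unfolding U_def by simp
    also have "nb * X n + mb * Y n - C - (\<alpha> * \<delta> * X n + \<alpha> * C) = mb * U n - C1"
      using i1[of n] unfolding C1_def by (simp add: algebra_simps)
    finally show ?thesis .
  qed
  have lower: "\<exists>M. \<forall>n\<ge>M. U n \<ge> - \<epsilon> * \<delta> ^ n" if "\<epsilon> > 0" for \<epsilon>
    by (rule dyn_lower[of \<delta> mb C1 \<epsilon> "max N Nl" U l\<epsilon>, OF d mb2 _ C10 that])
       (use mm hUneg hL in auto)
  have U0: "(\<lambda>n. U n / \<delta> ^ n) \<longlonglongrightarrow> 0"
    unfolding LIMSEQ_iff
  proof (intro allI impI)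
    fix r :: real assume r: "r > 0"
    obtain M1 where M1: "\<forall>n\<ge>M1. U n \<le> (r / 2) * \<delta> ^ n" using upper[of "r / 2"] r by auto
    obtain M2 where M2: "\<forall>n\<ge>M2. U n \<ge> - (r / 2) * \<delta> ^ n" using lower[of "r / 2"] r by auto
    have "\<forall>n\<ge>max M1 M2. norm (U n / \<delta> ^ n - 0) < r"
    proof (intro allI impI)
      fix n assume n: "n \<ge> max M1 M2"
      have "U n / \<delta> ^ n \<le> r / 2" using M1 n dp[of n] by (simp add: field_simps)
      moreover have "U n / \<delta> ^ n \<ge> - (r / 2)" using M2 n dp[of n] by (simp add: field_simps)
      ultimately have "\<bar>U n / \<delta> ^ n\<bar> \<le> r / 2" by (intro abs_leI) auto
      then show "norm (U n / \<delta> ^ n - 0) < r" using r by (simp only: diff_zero real_norm_def)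
    qed
    then show "\<exists>no. \<forall>n\<ge>no. norm (U n / \<delta> ^ n - 0) < r" by blast
  qed
  have "(\<lambda>n. U n / \<delta> ^ n + \<alpha> * (X n / \<delta> ^ n)) \<longlonglongrightarrow> 0 + \<alpha> * G"
    by (intro tendsto_add U0 tendsto_mult_left XG)
  moreover have "(\<lambda>n. U n / \<delta> ^ n + \<alpha> * (X n / \<delta> ^ n)) = (\<lambda>n. Y n / \<delta> ^ n)"
    unfolding U_def by (rule ext) (simp add: add_divide_distrib[symmetric])
  ultimately show ?thesis using G XG by auto
qed

lemma term_eq:
  fixes b :: "nat \<Rightarrow> nat \<Rightarrow> complex" and \<rho> :: real and z w :: complex
  assumes \<rho>: "\<rho> > 0"
  shows "norm (b i j * z ^ i * w ^ j) = (norm (b i j) * \<rho> ^ (i + j)) * ((norm z / \<rho>) ^ i * (norm w / \<rho>) ^ j)"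
proof -
  have e1: "(norm z / \<rho>) ^ i * \<rho> ^ i = norm z ^ i" using \<rho> by (simp add: power_divide)
  have e2: "(norm w / \<rho>) ^ j * \<rho> ^ j = norm w ^ j" using \<rho> by (simp add: power_divide)
  have "(norm (b i j) * \<rho> ^ (i + j)) * ((norm z / \<rho>) ^ i * (norm w / \<rho>) ^ j)
     = norm (b i j) * (((norm z / \<rho>) ^ i * \<rho> ^ i) * ((norm w / \<rho>) ^ j * \<rho> ^ j))"
    by (simp only: power_add mult_ac)
  also have "\<dots> = norm (b i j) * (norm z ^ i * norm w ^ j)" by (simp only: e1 e2)
  also have "\<dots> = norm (b i j * z ^ i * w ^ j)" by (simp add: norm_mult norm_power)
  finally show ?thesis by simp
qed

lemma a_summable:
  fixes b :: "nat \<Rightarrow> nat \<Rightarrow> complex" and \<rho> :: real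
  assumes qs: "(\<lambda>(i, j). norm (b i j * of_real \<rho> ^ i * of_real \<rho> ^ j)) summable_on UNIV" and \<rho>: "\<rho> > 0"
  shows "(\<lambda>(i, j). norm (b i j) * \<rho> ^ (i + j)) summable_on UNIV"
proof -
  have "(\<lambda>(i, j). norm (b i j * of_real \<rho> ^ i * of_real \<rho> ^ j)) = (\<lambda>(i, j). norm (b i j) * \<rho> ^ (i + j))"
  proof (rule ext, clarify)
    fix i j
    have "norm (of_real \<rho> :: complex) = \<rho>" using \<rho> by simp
    then show "norm (b i j * of_real \<rho> ^ i * of_real \<rho> ^ j) = norm (b i j) * \<rho> ^ (i + j)"
      by (simp only: norm_mult norm_power power_add mult.assoc)
  qed
  then show ?thesis using qs by simp
qed

lemma f_summable:
  fixes b :: "nat \<Rightarrow> nat \<Rightarrow> complex" and z w :: complex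
  assumes qs: "(\<lambda>(i, j). norm (b i j * z ^ i * w ^ j)) summable_on UNIV"
  shows "(\<lambda>(i, j). b i j * z ^ i * w ^ j) summable_on A"
proof -
  have "(\<lambda>x. norm ((\<lambda>(i, j). b i j * z ^ i * w ^ j) x)) = (\<lambda>(i, j). norm (b i j * z ^ i * w ^ j))"
    by (rule ext) (simp only: case_prod_unfold)
  then have "(\<lambda>x. norm ((\<lambda>(i, j). b i j * z ^ i * w ^ j) x)) summable_on UNIV" using qs by (simp only:)
  then have "(\<lambda>(i, j). b i j * z ^ i * w ^ j) summable_on UNIV" by (rule abs_summable_summable)
  then show ?thesis by (rule summable_on_subset_banach) simp
qed

lemma norm_f_summable:
  fixes b :: "nat \<Rightarrow> nat \<Rightarrow> complex" and z w :: complex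
  assumes qs: "(\<lambda>(i, j). norm (b i j * z ^ i * w ^ j)) summable_on UNIV"
  shows "(\<lambda>x. norm ((\<lambda>(i, j). b i j * z ^ i * w ^ j) x)) summable_on A"
proof -
  have "(\<lambda>x. norm ((\<lambda>(i, j). b i j * z ^ i * w ^ j) x)) = (\<lambda>(i, j). norm (b i j * z ^ i * w ^ j))"
    by (rule ext) (simp only: case_prod_unfold)
  then have "(\<lambda>x. norm ((\<lambda>(i, j). b i j * z ^ i * w ^ j) x)) summable_on UNIV" using qs by (simp only:)
  then show ?thesis by (rule summable_on_subset_banach) simp
qed

lemma q_upper:
  fixes b :: "nat \<Rightarrow> nat \<Rightarrow> complex" and \<rho> E :: real and z w :: complex
  assumes qs_z: "(\<lambda>(i, j). norm (b i j * z ^ i * w ^ j)) summable_on UNIV"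
    and qs_r: "(\<lambda>(i, j). norm (b i j * of_real \<rho> ^ i * of_real \<rho> ^ j)) summable_on UNIV"
    and \<rho>: "\<rho> > 0"
    and E: "\<And>i j. b i j \<noteq> 0 \<Longrightarrow> (norm z / \<rho>) ^ i * (norm w / \<rho>) ^ j \<le> E" and E0: "E \<ge> 0"
  shows "norm (\<Sum>\<^sub>\<infinity>(i, j). b i j * z ^ i * w ^ j) \<le> (\<Sum>\<^sub>\<infinity>(i, j). norm (b i j) * \<rho> ^ (i + j)) * E"
proof -
  let ?f = "\<lambda>(i, j). b i j * z ^ i * w ^ j"
  let ?a = "\<lambda>(i, j). norm (b i j) * \<rho> ^ (i + j)"
  have sa: "?a summable_on UNIV" by (rule a_summable[OF qs_r \<rho>])
  have sf: "?f summable_on UNIV" by (rule f_summable[OF qs_z])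
  have bnd: "norm (?f k) \<le> ?a k * E" for k
  proof (cases k)
    case (Pair i j)
    show ?thesis
    proof (cases "b i j = 0")
      case True then show ?thesis using Pair by simp
    next
      case False
      have "norm (?f k) = (norm (b i j) * \<rho> ^ (i + j)) * ((norm z / \<rho>) ^ i * (norm w / \<rho>) ^ j)"
        using Pair term_eq[OF \<rho>] by simp
      also have "\<dots> \<le> (norm (b i j) * \<rho> ^ (i + j)) * E"
        using E[OF False] \<rho> by (intro mult_left_mono) auto
      finally show ?thesis using Pair by simp
    qed
  qed
  have "norm (infsum ?f UNIV) \<le> infsum (\<lambda>k. ?a k * E) UNIV"
    by (rule norm_infsum_le[OF has_sum_infsum[OF sf] has_sum_infsum[OF summable_on_cmult_left[OF sa]]])
       (use bnd in auto)
  also have "\<dots> = infsum ?a UNIV * E" by (rule infsum_cmult_left) (use sa in auto)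
  finally show ?thesis .
qed

lemma q_lower:
  fixes b :: "nat \<Rightarrow> nat \<Rightarrow> complex" and \<rho> \<epsilon> :: real and z w :: complex
  assumes qs_z: "(\<lambda>(i, j). norm (b i j * z ^ i * w ^ j)) summable_on UNIV"
    and qs_r: "(\<lambda>(i, j). norm (b i j * of_real \<rho> ^ i * of_real \<rho> ^ j)) summable_on UNIV"
    and \<rho>: "\<rho> > 0" and eps: "\<epsilon> \<ge> 0"
    and E: "\<And>i j. b i j \<noteq> 0 \<Longrightarrow> (i, j) \<noteq> (n0, m0) \<Longrightarrow>
        (norm z / \<rho>) ^ i * (norm w / \<rho>) ^ j \<le> \<epsilon> * ((norm z / \<rho>) ^ n0 * (norm w / \<rho>) ^ m0)"
  shows "norm (\<Sum>\<^sub>\<infinity>(i, j). b i j * z ^ i * w ^ j) \<ge>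
     (norm (b n0 m0) * \<rho> ^ (n0 + m0) - (\<Sum>\<^sub>\<infinity>(i, j). norm (b i j) * \<rho> ^ (i + j)) * \<epsilon>)
        * ((norm z / \<rho>) ^ n0 * (norm w / \<rho>) ^ m0)"
proof -
  let ?f = "\<lambda>(i, j). b i j * z ^ i * w ^ j"
  let ?a = "\<lambda>(i, j). norm (b i j) * \<rho> ^ (i + j)"
  define P where "P = (norm z / \<rho>) ^ n0 * (norm w / \<rho>) ^ m0"
  have P0: "P \<ge> 0" unfolding P_def using \<rho> by simp
  define R where "R = UNIV - {(n0, m0)}"
  have sa: "?a summable_on UNIV" by (rule a_summable[OF qs_r \<rho>])
  have saR: "?a summable_on R" by (rule summable_on_subset_banach[OF sa]) simp
  have sfR: "?f summable_on R" by (rule f_summable[OF qs_z])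
  have a_nn: "\<And>i j. 0 \<le> norm (b i j) * \<rho> ^ (i + j)" using \<rho> by simp
  have ins: "infsum ?f UNIV = ?f (n0, m0) + infsum ?f R"
  proof -
    have U: "insert (n0, m0) R = UNIV" unfolding R_def by blast
    have "infsum ?f (insert (n0, m0) R) = ?f (n0, m0) + infsum ?f R"
      by (rule infsum_insert[OF sfR]) (simp add: R_def)
    then show ?thesis by (simp only: U)
  qed
  have bnd: "norm (?f k) \<le> ?a k * (\<epsilon> * P)" if "k \<in> R" for k
  proof (cases k)
    case (Pair i j)
    show ?thesis
    proof (cases "b i j = 0")
      case True then show ?thesis using Pair eps P0 by simp
    next
      case False
      have ne: "(i, j) \<noteq> (n0, m0)" using that Pair unfolding R_def by auto
      have "norm (?f k) = (norm (b i j) * \<rho> ^ (i + j)) * ((norm z / \<rho>) ^ i * (norm w / \<rho>) ^ j)"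
        using Pair term_eq[OF \<rho>] by simp
      also have "\<dots> \<le> (norm (b i j) * \<rho> ^ (i + j)) * (\<epsilon> * P)"
        using E[OF False ne] \<rho> unfolding P_def by (intro mult_left_mono) auto
      finally show ?thesis using Pair by simp
    qed
  qed
  have "norm (infsum ?f R) \<le> infsum (\<lambda>k. ?a k * (\<epsilon> * P)) R"
    by (rule norm_infsum_le[OF has_sum_infsum[OF sfR] has_sum_infsum[OF summable_on_cmult_left[OF saR]]])
       (use bnd in auto)
  also have "\<dots> = infsum ?a R * (\<epsilon> * P)" by (rule infsum_cmult_left) (use saR in auto)
  also have "\<dots> \<le> infsum ?a UNIV * (\<epsilon> * P)"
  proof (rule mult_right_mono)
    show "infsum ?a R \<le> infsum ?a UNIV"
      using a_nn by (intro infsum_mono2[OF saR sa]) (simp_all add: case_prod_unfold)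
    show "0 \<le> \<epsilon> * P" using eps P0 by simp
  qed
  finally have r: "norm (infsum ?f R) \<le> infsum ?a UNIV * (\<epsilon> * P)" .
  have m: "norm (?f (n0, m0)) = norm (b n0 m0) * \<rho> ^ (n0 + m0) * P"
    using term_eq[OF \<rho>] unfolding P_def by simp
  have "norm (infsum ?f UNIV) \<ge> norm (?f (n0, m0)) - norm (infsum ?f R)"
    unfolding ins by (rule norm_diff_ineq)
  moreover have "(norm (b n0 m0) * \<rho> ^ (n0 + m0) - infsum ?a UNIV * \<epsilon>) * P
      = norm (b n0 m0) * \<rho> ^ (n0 + m0) * P - infsum ?a UNIV * (\<epsilon> * P)" by (simp only: algebra_simps)
  ultimately have "norm (infsum ?f UNIV) \<ge> (norm (b n0 m0) * \<rho> ^ (n0 + m0) - infsum ?a UNIV * \<epsilon>) * P"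
    using r m by linarith
  then show ?thesis unfolding P_def .
qed

lemma ln_to_bot:
  fixes f :: "nat \<Rightarrow> complex" and \<rho> :: real
  assumes f: "f \<longlonglongrightarrow> 0" and nz: "\<And>n. n \<ge> N \<Longrightarrow> f n \<noteq> 0" and \<rho>: "\<rho> > 0"
  shows "filterlim (\<lambda>n. ln (norm (f n) / \<rho>)) at_bot sequentially"
  unfolding filterlim_at_bot
proof
  fix Z :: real
  have "\<rho> * exp Z > 0" using \<rho> by simp
  then obtain M where M: "\<And>n. n \<ge> M \<Longrightarrow> norm (f n - 0) < \<rho> * exp Z"
    using f unfolding LIMSEQ_iff by blast
  have "ln (norm (f n) / \<rho>) \<le> Z" if n: "n \<ge> max M N" for n
  proof -
    have pos: "norm (f n) / \<rho> > 0" using nz[of n] n \<rho> by simp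
    have "norm (f n) / \<rho> < exp Z" using M[of n] n \<rho> by (simp add: field_simps)
    then have "ln (norm (f n) / \<rho>) < ln (exp Z)" using pos by (subst ln_less_cancel_iff) auto
    then show ?thesis by simp
  qed
  then show "eventually (\<lambda>n. ln (norm (f n) / \<rho>) \<le> Z) sequentially"
    unfolding eventually_sequentially by blast
qed

lemma ln_upper:
  fixes u A1 t \<rho> :: real
  assumes "u > 0" "u \<le> A1 * exp t" "A1 > 0" "\<rho> > 0"
  shows "ln (u / \<rho>) \<le> ln A1 + t - ln \<rho>"
proof -
  have "ln u \<le> ln (A1 * exp t)" using assms by simp
  also have "\<dots> = ln A1 + t" using assms by (simp add: ln_mult)
  finally show ?thesis using assms by (simp add: ln_div)
qed

lemma ln_lower:
  fixes u c t \<rho> :: real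
  assumes "u \<ge> c * exp t" "c > 0" "\<rho> > 0"
  shows "ln (u / \<rho>) \<ge> ln c + t - ln \<rho>"
proof -
  have cp: "c * exp t > 0" using assms by simp
  then have up: "u > 0" using assms by linarith
  have "ln (c * exp t) \<le> ln u" using assms cp up by simp
  moreover have "ln (c * exp t) = ln c + t" using assms by (simp add: ln_mult)
  ultimately show ?thesis using assms up by (simp add: ln_div)
qed

lemma pow_exp:
  fixes x :: real assumes "x > 0" shows "x ^ i = exp (real i * ln x)"
  using assms by (simp add: exp_of_nat_mult)

theorem corollary1p8:
  fixes D :: "complex set" and p :: "complex \<Rightarrow> complex"
    and q :: "complex \<Rightarrow> complex \<Rightarrow> complex" and b :: "nat \<Rightarrow> nat \<Rightarrow> complex"
    and a :: complex and \<delta> s :: nat and nv mv :: "nat \<Rightarrow> nat" and z w :: complex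
  assumes dom: "D = UNIV \<or> (\<exists>R>0. D = ball 0 R \<and> compact (closure (basin_p D p))
                                 \<and> closure (basin_p D p) \<subseteq> ball 0 R)"
    and p_holo: "p holomorphic_on D"
    and delta: "\<delta> \<ge> 2" and a_nz: "a \<noteq> 0"
    and p_exp: "\<exists>h. h holomorphic_on D \<and> (\<forall>z\<in>D. p z = a * z ^ \<delta> + z ^ (\<delta> + 1) * h z)"
    and q_summ: "\<forall>z\<in>D. \<forall>w. (\<lambda>(i, j). norm (b i j * z ^ i * w ^ j)) summable_on UNIV"
    and q_def: "\<forall>z\<in>D. \<forall>w. q z w = (\<Sum>\<^sub>\<infinity>(i, j). b i j * z ^ i * w ^ j)"
    and b00: "b 0 0 = 0" and b01: "b 0 1 = 0"
    and s_gt: "s > 1"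
    and vert: "newton_vertices b = (\<lambda>k. (real (nv k), real (mv k))) ` {1..s}"
    and nv_mono: "strict_mono_on {1..s} nv"
    and T_eq: "y_intercept (real (nv (s - 1)), real (mv (s - 1))) (real (nv s), real (mv s)) = real \<delta>"
    and m1: "real \<delta> > real (mv (s - 1))" and m2: "mv (s - 1) > mv s" and m3: "mv s \<ge> 2"
    and zw: "(z, w) \<in> basin0 D p q - Ew D p q"
  shows "(\<lambda>n. elog (cmod (snd ((skew p q ^^ n) (z, w)))) / ereal (real \<delta> ^ n))
           \<longlonglongrightarrow> ereal (real (nv s) / (real \<delta> - real (mv s))) * green_p p \<delta> z"
proof -
  interpret npd b \<delta> s nv mv
    by unfold_locales (fact s_gt vert nv_mono T_eq m1 m2 m3)+
  obtain h where h_holo: "h holomorphic_on D" and p_eq: "\<And>x. x \<in> D \<Longrightarrow> p x = a * x ^ \<delta> + x ^ (\<delta> + 1) * h x"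
    using p_exp by blast
  obtain \<rho> where \<rho>: "\<rho> > 0" "cball 0 \<rho> \<subseteq> D"
  proof (cases "D = UNIV")
    case True then show ?thesis using that[of 1] by auto
  next
    case False
    then obtain R where R: "R > 0" "D = ball 0 R" using dom by blast
    have "cball 0 (R / 2) \<subseteq> ball (0::complex) R" using R by (auto simp: subset_iff)
    then show ?thesis using that[of "R / 2"] R by auto
  qed
  have hc: "continuous_on (cball 0 \<rho>) h"
    using holomorphic_on_imp_continuous_on[OF h_holo] \<rho>(2) continuous_on_subset by blast
  obtain H where H: "H > 0" "\<And>x. x \<in> cball 0 \<rho> \<Longrightarrow> norm (h x) \<le> H"
    using compact_imp_bounded[OF compact_continuous_image[OF hc compact_cball]]
    unfolding bounded_pos by auto
  define r1 where "r1 = min \<rho> (norm a / (2 * H))"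
  have r1: "r1 > 0" "r1 \<le> \<rho>" unfolding r1_def using \<rho> H a_nz by auto
  have "(0::complex) \<in> D" using \<rho> by (auto simp: subset_iff)
  then have p0: "p 0 = 0" using p_eq[of 0] delta by (simp add: power_0_left)
  have p_bnd: "norm (p x) \<ge> norm x ^ \<delta> * (norm a / 2) \<and> norm (p x) \<le> norm x ^ \<delta> * (3 * norm a / 2)"
    if x: "norm x \<le> r1" for x
  proof -
    have xD: "x \<in> D" using x r1 \<rho> by (auto simp: subset_iff)
    have pe: "p x = x ^ \<delta> * (a + x * h x)" using p_eq[OF xD] by (simp add: algebra_simps)
    have "norm (h x) \<le> H" using H(2)[of x] x r1 by auto
    then have "norm x * norm (h x) \<le> r1 * H" using x H r1 by (intro mult_mono) auto
    then have "norm (x * h x) \<le> r1 * H" by (simp add: norm_mult)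
    also have "\<dots> \<le> norm a / 2" unfolding r1_def using H by (simp add: field_simps min_def)
    finally have xh: "norm (x * h x) \<le> norm a / 2" .
    have "norm (a + x * h x) \<ge> norm a - norm (x * h x)" by (metis norm_diff_ineq)
    then have l: "norm (a + x * h x) \<ge> norm a / 2" using xh by linarith
    have "norm (a + x * h x) \<le> norm a + norm (x * h x)" by (rule norm_triangle_ineq)
    then have u: "norm (a + x * h x) \<le> 3 * norm a / 2" using xh by linarith
    have nx: "norm (p x) = norm x ^ \<delta> * norm (a + x * h x)" using pe by (simp add: norm_mult norm_power)
    have "norm x ^ \<delta> * (norm a / 2) \<le> norm x ^ \<delta> * norm (a + x * h x)"
      using l by (intro mult_left_mono) auto
    moreover have "norm x ^ \<delta> * norm (a + x * h x) \<le> norm x ^ \<delta> * (3 * norm a / 2)"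
      using u by (intro mult_left_mono) auto
    ultimately show ?thesis unfolding nx by simp
  qed
  define F where "F = skew p q"
  define zs where "zs = (\<lambda>n. fst ((F ^^ n) (z, w)))"
  define ws where "ws = (\<lambda>n. snd ((F ^^ n) (z, w)))"
  have orb: "(F ^^ n) (z, w) = (zs n, ws n)" for n unfolding zs_def ws_def by simp
  have zsS: "zs (Suc n) = p (zs n)" and wsS: "ws (Suc n) = q (zs n) (ws n)" for n
    using orb[of "Suc n"] orb[of n] by (simp_all add: F_def skew_def)
  have zs0: "zs 0 = z" unfolding zs_def by simp
  have pn: "(p ^^ n) z = zs n" for n
    by (induction n) (simp_all add: zs0 zsS)
  have zwB: "(z, w) \<in> basin0 D p q" and zwE: "(z, w) \<notin> Ew D p q" using zw by auto
  have zsD: "zs n \<in> D" for n using zwB unfolding basin0_def zs_def F_def by auto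
  have lim: "(\<lambda>n. (F ^^ n) (z, w)) \<longlonglongrightarrow> (0, 0)" using zwB unfolding basin0_def F_def by auto
  have zs_lim: "zs \<longlonglongrightarrow> 0" using tendsto_fst[OF lim] unfolding zs_def by simp
  have ws_lim: "ws \<longlonglongrightarrow> 0" using tendsto_snd[OF lim] unfolding ws_def by simp
  have ws_nz: "ws n \<noteq> 0" for n
  proof
    assume "ws n = 0"
    then have "(z, w) \<in> Ew D p q" unfolding Ew_def using zsD zwB unfolding zs_def ws_def F_def basin0_def
      by blast
    then show False using zwE by simp
  qed
  have rD: "of_real \<rho> \<in> D" using \<rho> by (auto simp: subset_iff)
  have qs_r: "(\<lambda>(i, j). norm (b i j * of_real \<rho> ^ i * of_real \<rho> ^ j)) summable_on UNIV"
    using q_summ rD by blast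
  define A where "A = (\<Sum>\<^sub>\<infinity>(i, j). norm (b i j) * \<rho> ^ (i + j))"
  define A1 where "A1 = \<bar>A\<bar> + 1"
  have A1p: "A1 > 0" "A \<le> A1" unfolding A1_def by auto
  define c0 where "c0 = norm (b nb mb) * \<rho> ^ (nb + mb)"
  have c0p: "c0 > 0" unfolding c0_def using b_nbmb \<rho> by simp
  define \<epsilon> where "\<epsilon> = min 1 (c0 / (2 * A1))"
  have eps: "\<epsilon> > 0" unfolding \<epsilon>_def using c0p A1p by simp
  have eps1: "\<epsilon> \<le> 1" unfolding \<epsilon>_def by simp
  have Aeps: "A * \<epsilon> \<le> c0 / 2"
  proof -
    have "A * \<epsilon> \<le> A1 * \<epsilon>" using A1p eps by (intro mult_right_mono) auto
    also have "\<dots> \<le> A1 * (c0 / (2 * A1))" using A1p unfolding \<epsilon>_def by (intro mult_left_mono) auto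
    also have "\<dots> = c0 / 2" using A1p by simp
    finally show ?thesis .
  qed
  obtain N where N: "\<And>n. n \<ge> N \<Longrightarrow> norm (zs n) \<le> r1 \<and> norm (ws n) \<le> \<rho>"
  proof -
    obtain N1 where N1: "\<And>n. n \<ge> N1 \<Longrightarrow> norm (zs n - 0) < r1" using zs_lim r1 unfolding LIMSEQ_iff by blast
    obtain N2 where N2: "\<And>n. n \<ge> N2 \<Longrightarrow> norm (ws n - 0) < \<rho>" using ws_lim \<rho> unfolding LIMSEQ_iff by blast
    show ?thesis using N1 N2 by (intro that[of "max N1 N2"]) (auto intro: less_imp_le)
  qed
  define Y where "Y = (\<lambda>n. ln (norm (ws n) / \<rho>))"
  have wsY: "norm (ws n) / \<rho> = exp (Y n)" for n
    unfolding Y_def using ws_nz[of n] \<rho> by simp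
  have Yneg: "Y n \<le> 0" if "n \<ge> N" for n
  proof -
    have "norm (ws n) / \<rho> \<le> 1" using N[OF that] \<rho> by simp
    then show ?thesis unfolding Y_def using ws_nz[of n] \<rho> by simp
  qed
  have Ylim: "filterlim Y at_bot sequentially"
    unfolding Y_def by (rule ln_to_bot[OF ws_lim _ \<rho>(1)]) (rule ws_nz)
  have qs_n: "(\<lambda>(i, j). norm (b i j * zs n ^ i * ws n ^ j)) summable_on UNIV" for n
    using q_summ zsD by blast
  have q_n: "ws (Suc n) = (\<Sum>\<^sub>\<infinity>(i, j). b i j * zs n ^ i * ws n ^ j)" for n
    using q_def zsD wsS by simp
  have alpha_eq: "\<alpha> = real nb / (real \<delta> - real mb)" unfolding \<alpha>_def Dd_def by simp
  have lhs_eq: "elog (cmod (snd ((skew p q ^^ n) (z, w)))) / ereal (real \<delta> ^ n)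
      = ereal (ln (norm (ws n)) / real \<delta> ^ n)" for n
  proof -
    have "snd ((skew p q ^^ n) (z, w)) = ws n" unfolding ws_def F_def ..
    then show ?thesis using ws_nz[of n] delta unfolding elog_def by simp
  qed
  have dpos: "real \<delta> ^ n > 0" for n using delta by simp
  have d1: "real \<delta> > 1" using delta by simp
  have ap: "\<alpha> > 0" by (rule alpha_pos)
  have Cws: "ln (norm (ws n)) / real \<delta> ^ n = Y n / real \<delta> ^ n + ln \<rho> / real \<delta> ^ n" for n
    unfolding Y_def using ws_nz[of n] \<rho> by (simp add: ln_div add_divide_distrib[symmetric])
  have lnr0: "(\<lambda>n. ln \<rho> / real \<delta> ^ n) \<longlonglongrightarrow> 0"
    by (intro tendsto_divide_0[OF tendsto_const] filterlim_realpow_sequentially_gt1) (use d1 in simp)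
  show ?thesis
  proof (cases "\<exists>n0. zs n0 = 0")
    case True
    then obtain n0 where n0: "zs n0 = 0" by blast
    have zs0': "zs (n0 + k) = 0" for k
      by (induction k) (simp_all add: n0 zsS p0)
    have zsz: "zs n = 0" if "n \<ge> n0" for n using zs0'[of "n - n0"] that by simp
    define M where "M = max N n0"
    have hY0: "Y (Suc n) \<le> \<bar>ln A1 - ln \<rho>\<bar> + (real \<delta> + 1) * Y n" if n: "n \<ge> M" for n
    proof -
      have zn: "zs n = 0" using zsz n unfolding M_def by simp
      have y1: "norm (ws n) / \<rho> \<le> 1" "norm (ws n) / \<rho> \<ge> 0" using N[of n] n \<rho> unfolding M_def by auto
      have E: "(norm (zs n) / \<rho>) ^ i * (norm (ws n) / \<rho>) ^ j \<le> (norm (ws n) / \<rho>) ^ (\<delta> + 1)"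
        if bij: "b i j \<noteq> 0" for i j
      proof (cases "i = 0")
        case True
        have "j \<ge> \<delta> + 1" using zero_ineq bij True by simp
        then have "(norm (ws n) / \<rho>) ^ j \<le> (norm (ws n) / \<rho>) ^ (\<delta> + 1)"
          using y1 by (intro power_decreasing) auto
        then show ?thesis using True by (simp only: power_0 mult_1)
      next
        case False
        have "0 \<le> (norm (ws n) / \<rho>) ^ (\<delta> + 1)" using y1 by (intro zero_le_power) 
        then show ?thesis using zn False by (simp add: power_0_left del: power_Suc)
      qed
      have E0: "0 \<le> (norm (ws n) / \<rho>) ^ (\<delta> + 1)" by (rule zero_le_power) (use y1 in simp)
      have "norm (ws (Suc n)) \<le> A * (norm (ws n) / \<rho>) ^ (\<delta> + 1)"
        unfolding q_n A_def by (rule q_upper[OF qs_n qs_r \<rho>(1) E E0])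
      also have "\<dots> \<le> A1 * (norm (ws n) / \<rho>) ^ (\<delta> + 1)"
        using A1p E0 by (intro mult_right_mono) auto
      also have "(norm (ws n) / \<rho>) ^ (\<delta> + 1) = exp ((real \<delta> + 1) * Y n)"
        unfolding wsY by (metis exp_of_nat_mult of_nat_Suc add.commute Suc_eq_plus1)
      finally have "Y (Suc n) \<le> ln A1 + (real \<delta> + 1) * Y n - ln \<rho>"
        unfolding Y_def using ln_upper ws_nz[of "Suc n"] A1p \<rho> by simp
      then show ?thesis by linarith
    qed
    have Ybot: "filterlim (\<lambda>n. Y n / real \<delta> ^ n) at_bot sequentially"
      by (rule zero_case_seq[OF d1 hY0 abs_ge_zero Ylim])
    have Lbot: "filterlim (\<lambda>n. ln (norm (ws n)) / real \<delta> ^ n) at_bot sequentially"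
      unfolding filterlim_at_bot
    proof
      fix Z :: real
      have ev: "eventually (\<lambda>n. Y n / real \<delta> ^ n \<le> Z - \<bar>ln \<rho>\<bar>) sequentially"
        using Ybot unfolding filterlim_at_bot by blast
      have pw: "ln \<rho> / real \<delta> ^ n \<le> \<bar>ln \<rho>\<bar>" for n
      proof -
        have "1 \<le> real \<delta> ^ n" using d1 by (intro one_le_power) simp
        then have "\<bar>ln \<rho>\<bar> * 1 \<le> \<bar>ln \<rho>\<bar> * real \<delta> ^ n" by (intro mult_left_mono) auto
        then have "\<bar>ln \<rho>\<bar> / real \<delta> ^ n \<le> \<bar>ln \<rho>\<bar>"
          using dpos[of n] by (simp add: divide_le_eq)
        moreover have "ln \<rho> / real \<delta> ^ n \<le> \<bar>ln \<rho>\<bar> / real \<delta> ^ n"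
          using dpos[of n] by (intro divide_right_mono) auto
        ultimately show ?thesis by linarith
      qed
      show "eventually (\<lambda>n. ln (norm (ws n)) / real \<delta> ^ n \<le> Z) sequentially"
        using ev
      proof (rule eventually_mono)
        fix n assume "Y n / real \<delta> ^ n \<le> Z - \<bar>ln \<rho>\<bar>"
        then show "ln (norm (ws n)) / real \<delta> ^ n \<le> Z" using Cws[of n] pw[of n] by linarith
      qed
    qed
    have L: "(\<lambda>n. elog (cmod (snd ((skew p q ^^ n) (z, w)))) / ereal (real \<delta> ^ n)) \<longlonglongrightarrow> -\<infinity>"
      unfolding lhs_eq using ereal_tendsto_simps2(3)[of "\<lambda>n. ln (norm (ws n)) / real \<delta> ^ n"] Lbot
      by (simp add: comp_def)
    have g: "green_p p \<delta> z = -\<infinity>"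
    proof -
      have "eventually (\<lambda>n. elog (cmod ((p ^^ n) z)) / ereal (real \<delta> ^ n) = -\<infinity>) sequentially"
        unfolding eventually_sequentially
      proof (intro exI[of _ n0] allI impI)
        fix n assume "n \<ge> n0"
        then have "(p ^^ n) z = 0" using zsz pn by simp
        then show "elog (cmod ((p ^^ n) z)) / ereal (real \<delta> ^ n) = -\<infinity>"
          using dpos[of n] unfolding elog_def by (simp add: divide_ereal_def)
      qed
      then have "(\<lambda>n. elog (cmod ((p ^^ n) z)) / ereal (real \<delta> ^ n)) \<longlonglongrightarrow> -\<infinity>"
        by (rule tendsto_eventually)
      then show ?thesis unfolding green_p_def by (rule limI)
    qed
    show ?thesis using L ap unfolding g alpha_eq[symmetric] by simp
  next
    case False
    then have zs_nz: "zs n \<noteq> 0" for n by blast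
    define X where "X = (\<lambda>n. ln (norm (zs n) / \<rho>))"
    have zsX: "norm (zs n) / \<rho> = exp (X n)" for n
      unfolding X_def using zs_nz[of n] \<rho> by simp
    have Xneg: "X n \<le> 0" if "n \<ge> N" for n
    proof -
      have "norm (zs n) / \<rho> \<le> 1" using N[OF that] r1 \<rho> by simp
      then show ?thesis unfolding X_def using zs_nz[of n] \<rho> by simp
    qed
    have Xlim: "filterlim X at_bot sequentially"
      unfolding X_def by (rule ln_to_bot[OF zs_lim _ \<rho>(1)]) (rule zs_nz)
    define la1 where "la1 = ln (norm a / 2)"
    define la2 where "la2 = ln (3 * norm a / 2)"
    define Cx where "Cx = \<bar>la1\<bar> + \<bar>la2\<bar> + (real \<delta> - 1) * \<bar>ln \<rho>\<bar>"
    have hX0: "\<bar>X (Suc n) - real \<delta> * X n\<bar> \<le> Cx" if n: "n \<ge> N" for n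
    proof -
      define u where "u = norm (zs n)"
      define pu where "pu = norm (zs (Suc n))"
      have up: "u > 0" unfolding u_def using zs_nz by simp
      have pup: "pu > 0" unfolding pu_def using zs_nz by simp
      have pb: "pu \<ge> u ^ \<delta> * (norm a / 2)" "pu \<le> u ^ \<delta> * (3 * norm a / 2)"
        using p_bnd[of "zs n"] N[OF n] unfolding u_def pu_def zsS by auto
      have an: "norm a > 0" using a_nz by simp
      have "ln pu \<ge> ln (u ^ \<delta> * (norm a / 2))" using pb(1) up an pup by (subst ln_le_cancel_iff) auto
      moreover have "ln (u ^ \<delta> * (norm a / 2)) = real \<delta> * ln u + la1"
      proof -
        have "ln (u ^ \<delta> * (norm a / 2)) = ln (u ^ \<delta>) + ln (norm a / 2)" by (rule ln_mult_pos) (use up an in auto)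
        then show ?thesis unfolding la1_def using up by (simp add: ln_realpow)
      qed
      moreover have "ln pu \<le> ln (u ^ \<delta> * (3 * norm a / 2))" using pb(2) up an pup by (subst ln_le_cancel_iff) auto
      moreover have "ln (u ^ \<delta> * (3 * norm a / 2)) = real \<delta> * ln u + la2"
      proof -
        have "ln (u ^ \<delta> * (3 * norm a / 2)) = ln (u ^ \<delta>) + ln (3 * norm a / 2)" by (rule ln_mult_pos) (use up an in auto)
        then show ?thesis unfolding la2_def using up by (simp add: ln_realpow)
      qed
      moreover have "X (Suc n) = ln pu - ln \<rho>" unfolding X_def pu_def using pup \<rho> by (simp add: ln_div pu_def)
      moreover have "X n = ln u - ln \<rho>" unfolding X_def u_def using up \<rho> by (simp add: ln_div u_def)
      moreover have "\<bar>(real \<delta> - 1) * ln \<rho>\<bar> \<le> (real \<delta> - 1) * \<bar>ln \<rho>\<bar>"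
        using delta by (simp add: abs_mult)
      ultimately have b1: "la1 \<le> ln pu - real \<delta> * ln u" "ln pu - real \<delta> * ln u \<le> la2"
        and ex: "X (Suc n) = ln pu - ln \<rho>" "X n = ln u - ln \<rho>"
        and ab: "\<bar>(real \<delta> - 1) * ln \<rho>\<bar> \<le> (real \<delta> - 1) * \<bar>ln \<rho>\<bar>" by linarith+
      have "X (Suc n) - real \<delta> * X n = (ln pu - real \<delta> * ln u) + (real \<delta> - 1) * ln \<rho>"
        unfolding ex by (simp add: algebra_simps)
      then show ?thesis unfolding Cx_def using b1 ab by (simp add: abs_le_iff) linarith
    qed
    have Cx0: "Cx \<ge> 0" unfolding Cx_def using delta by simp
    define l\<epsilon> where "l\<epsilon> = ln \<epsilon>"
    define C where "C = Cx + \<bar>ln A1\<bar> + \<bar>ln (c0 / 2)\<bar> + 2 * \<bar>ln \<rho>\<bar>"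
    have hX: "\<bar>X (Suc n) - real \<delta> * X n\<bar> \<le> C" if n: "n \<ge> N" for n
      using hX0[OF n] unfolding C_def by linarith
    have xy: "(norm (zs n) / \<rho>) ^ i * (norm (ws n) / \<rho>) ^ j = exp (real i * X n + real j * Y n)" for n i j
      unfolding zsX wsY by (simp add: exp_add exp_of_nat_mult)
    have hup: "Y (Suc n) \<le> C + max (real nb * X n + real mb * Y n) (max (real na * X n + real ma * Y n) (\<delta>2 * Y n))"
      if n: "n \<ge> N" for n
    proof -
      define Mx where "Mx = max (real nb * X n + real mb * Y n) (max (real na * X n + real ma * Y n) (\<delta>2 * Y n))"
      have E: "(norm (zs n) / \<rho>) ^ i * (norm (ws n) / \<rho>) ^ j \<le> exp Mx" if bij: "b i j \<noteq> 0" for i j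
        unfolding xy Mx_def using star_ineq[OF bij Xneg[OF n] Yneg[OF n]] by simp
      have "norm (ws (Suc n)) \<le> A * exp Mx"
        unfolding q_n A_def using E by (intro q_upper[OF qs_n qs_r \<rho>(1)]) auto
      also have "\<dots> \<le> A1 * exp Mx" using A1p by (intro mult_right_mono) auto
      finally have "Y (Suc n) \<le> ln A1 + Mx - ln \<rho>"
        unfolding Y_def using ln_upper ws_nz[of "Suc n"] A1p \<rho> by simp
      then show ?thesis unfolding Mx_def C_def using Cx0 abs_ge_self[of "ln A1"] abs_ge_minus_self[of "ln \<rho>"]
        abs_ge_zero[of "ln (c0 / 2)"] by linarith
    qed
    have hlow: "Y (Suc n) \<ge> real nb * X n + real mb * Y n - C"
      if n: "n \<ge> N" and lx: "X n \<le> l\<epsilon>" and ly: "Y n - \<alpha> * X n \<le> l\<epsilon>" for n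
    proof -
      define P where "P = exp (real nb * X n + real mb * Y n)"
      have Pxy: "(norm (zs n) / \<rho>) ^ nb * (norm (ws n) / \<rho>) ^ mb = P" unfolding P_def xy ..
      have E: "(norm (zs n) / \<rho>) ^ i * (norm (ws n) / \<rho>) ^ j \<le> \<epsilon> * ((norm (zs n) / \<rho>) ^ nb * (norm (ws n) / \<rho>) ^ mb)"
        if bij: "b i j \<noteq> 0" and ne: "(i, j) \<noteq> (nb, mb)" for i j
      proof -
        have "l\<epsilon> \<le> 0" unfolding l\<epsilon>_def using eps eps1 by simp
        then have U0: "Y n - \<alpha> * X n \<le> 0" using ly by linarith
        have "real i * X n + real j * Y n \<le> real nb * X n + real mb * Y n + max (X n) (Y n - \<alpha> * X n)"
          by (rule low_ineq[OF bij ne Xneg[OF n] U0])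
        also have "\<dots> \<le> real nb * X n + real mb * Y n + l\<epsilon>" using lx ly by simp
        finally have "exp (real i * X n + real j * Y n) \<le> exp (real nb * X n + real mb * Y n + l\<epsilon>)" by simp
        also have "\<dots> = \<epsilon> * P" unfolding P_def l\<epsilon>_def using eps by (simp add: exp_add)
        finally show ?thesis unfolding xy P_def .
      qed
      have "norm (ws (Suc n)) \<ge> (c0 - A * \<epsilon>) * P"
        using q_lower[OF qs_n qs_r \<rho>(1) less_imp_le[OF eps] E] unfolding q_n[symmetric] A_def[symmetric] c0_def[symmetric] Pxy
        by simp
      moreover have "(c0 - A * \<epsilon>) * P \<ge> (c0 / 2) * P"
        using Aeps unfolding P_def by (intro mult_right_mono) auto
      ultimately have "norm (ws (Suc n)) \<ge> (c0 / 2) * exp (real nb * X n + real mb * Y n)"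
        unfolding P_def by linarith
      then have "Y (Suc n) \<ge> ln (c0 / 2) + (real nb * X n + real mb * Y n) - ln \<rho>"
        unfolding Y_def using ln_lower c0p \<rho> by simp
      then show ?thesis unfolding C_def using Cx0 abs_ge_minus_self[of "ln (c0 / 2)"] abs_ge_self[of "ln \<rho>"]
        abs_ge_zero[of "ln A1"] by linarith
    qed
    have nbR: "real nb = \<alpha> * (real \<delta> - real mb)" using alpha_D unfolding Dd_def by simp
    have naR: "real na = \<alpha> * (real \<delta> - real ma)" using alpha_na by simp
    obtain G where G: "G < 0" and XG: "(\<lambda>n. X n / real \<delta> ^ n) \<longlonglongrightarrow> G"
      and YG: "(\<lambda>n. Y n / real \<delta> ^ n) \<longlonglongrightarrow> \<alpha> * G"
    proof -
      have "\<exists>G<0. (\<lambda>n. X n / real \<delta> ^ n) \<longlonglongrightarrow> G \<and> (\<lambda>n. Y n / real \<delta> ^ n) \<longlonglongrightarrow> \<alpha> * G"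
      proof (rule dyn_main[where N = N and C = C and l\<epsilon> = l\<epsilon> and \<delta>t = \<delta>2])
        show "1 < real \<delta>" by (rule d1)
        show "0 < \<alpha>" by (rule ap)
        show "1 \<le> real nb" using nb_pos by simp
        show "1 \<le> real na" using na_pos by simp
        show "2 \<le> real mb" using m3 by simp
        show "real mb < real ma" using m2 by simp
        show "real ma < real \<delta>" using m1 by simp
        show "real \<delta> < \<delta>2" by (rule delta2_gt)
      qed (use nbR naR hX Xneg Yneg hup hlow Xlim Ylim in auto)
      then show ?thesis using that by blast
    qed
    have Czs: "ln (norm (zs n)) / real \<delta> ^ n = X n / real \<delta> ^ n + ln \<rho> / real \<delta> ^ n" for n
      unfolding X_def using zs_nz[of n] \<rho> by (simp add: ln_div add_divide_distrib[symmetric])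
    have Lzs: "(\<lambda>n. ln (norm (zs n)) / real \<delta> ^ n) \<longlonglongrightarrow> G"
      unfolding Czs using tendsto_add[OF XG lnr0] by simp
    have Lws: "(\<lambda>n. ln (norm (ws n)) / real \<delta> ^ n) \<longlonglongrightarrow> \<alpha> * G"
      unfolding Cws using tendsto_add[OF YG lnr0] by simp
    have g: "green_p p \<delta> z = ereal G"
    proof -
      have "(\<lambda>n. elog (cmod ((p ^^ n) z)) / ereal (real \<delta> ^ n)) = (\<lambda>n. ereal (ln (norm (zs n)) / real \<delta> ^ n))"
        using zs_nz dpos unfolding pn elog_def by (auto intro!: ext)
      then have "(\<lambda>n. elog (cmod ((p ^^ n) z)) / ereal (real \<delta> ^ n)) \<longlonglongrightarrow> ereal G"
        using tendsto_ereal[OF Lzs] by simp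
      then show ?thesis unfolding green_p_def by (rule limI)
    qed
    show ?thesis
      unfolding lhs_eq g alpha_eq[symmetric] using tendsto_ereal[OF Lws] by simp
  qed
qed

end
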